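(* Let $k\ge1$, $n=2k-1$, $T^n=(\mathbb{R}/k\mathbb{Z})^n$, $X_0=\langle\!\langle[0,1]^2\times[0,2]^2\times\cdots\times[0,k-1]^2\times[0,k]\rangle\!\rangle$ and $X_i=X_0+(i,\dots,i)$ for $i\in\mathbb{Z}_k$. Let $I\subseteq\mathbb{Z}_k$ be nonempty, written $I=\{i_0,\dots,i_{\ell-1}\}$ with $0\le i_0<i_1<\cdots<i_{\ell-1}\le k-1$, and set $i_\ell=i_0+k$. For $s\in\{0,\dots,\ell-1\}$ define $C_{I,s}\subset T^n$ as the product, over $t=0,1,\dots,\ell-1$ in order, of the blocks \[B_t=\begin{cases}\{i_t\}\times\prod_{j=i_t+1}^{i_{t+1}-1}[i_t,j]^2\times[i_t,i_{t+1}] & t\neq s,\\[2pt] \prod_{j=i_t+1}^{i_{t+1}-1}[i_t,j]^2\times[i_t,i_{t+1}] & t=s,\end{cases}\] (an empty product contributes no factor). Then \[X_I:=\bigcap_{i\in I}X_i=\bigcup_{s=0}^{\ell-1}\langle\!\langle C_{I,s}\rangle\!\rangle.\] In particular, \[\bigcap_{i\in\mathbb{Z}_k}X_i=\bigcup_{i_*\in\mathbb{Z}_k}\Big\langle\!\Big\langle\{0\}\times\cdots\times\widehat{\{i_*\}}\times\cdots\times\{k-1\}\times\prod_{i=0}^{k-1}[i,i+1]\Big\rangle\!\Big\rangle,\] where the hat indicates that the singleton factor $\{i_*\}$ is omitted (so there are $k-1$ singleton factors followed by $k$ interval factors).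
   Context: For $U\subset T^n$, $\langle\!\langle U\rangle\!\rangle=\{\mathbf{x}_\sigma:\mathbf{x}\in U,\ \sigma\in S_n\}$ with $\mathbf{x}_\sigma=(x_{\sigma(1)},\dots,x_{\sigma(n)})$. $[a,b]^2$ denotes two Cartesian factors equal to $[a,b]$. Products of real intervals and singletons (each block $B_t$ contributes $2(i_{t+1}-i_t)$ or $2(i_{t+1}-i_t)-1$ factors, totaling $n$) are regarded as subsets of $T^n$ via the quotient $\mathbb{R}^n\to(\mathbb{R}/k\mathbb{Z})^n$. $X_0+(i,\dots,i)=\{\mathbf{x}+(i,\dots,i):\mathbf{x}\in X_0\}$. *)

theory Defs
  imports Complex_Main "HOL-Combinatorics.Permutations"
begin

(* T^n = (R / kZ)^n is represented by canonical representatives: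
   lists of length n with every entry in [0,k).  A subset of T^n is a set of such lists. *)

definition tred :: "real \<Rightarrow> real \<Rightarrow> real" where
  "tred k t = t - k * of_int \<lfloor>t / k\<rfloor>"

definition tproj :: "real \<Rightarrow> real list \<Rightarrow> real list" where
  "tproj k x = map (tred k) x"

(* product of real intervals [a,b] (singletons are [a,a]), as a subset of R^n *)
definition box :: "(real \<times> real) list \<Rightarrow> real list set" where
  "box B = {x. length x = length B \<and> (\<forall>j<length B. fst (B ! j) \<le> x ! j \<and> x ! j \<le> snd (B ! j))}"

definition tbox :: "real \<Rightarrow> (real \<times> real) list \<Rightarrow> real list set" where
  "tbox k B = tproj k ` box B"

definition symclos :: "real list set \<Rightarrow> real list set" where
  "symclos U = {permute_list \<sigma> x | x \<sigma>. x \<in> U \<and> \<sigma> permutes {..<length x}}"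

definition tshift :: "real \<Rightarrow> real \<Rightarrow> real list set \<Rightarrow> real list set" where
  "tshift k c U = tproj k ` ((\<lambda>x. map (\<lambda>t. t + c) x) ` U)"

definition X0 :: "nat \<Rightarrow> real list set" where
  "X0 k = symclos (tbox (real k)
      (concat (map (\<lambda>j. [(0, real j), (0, real j)]) [1..<k]) @ [(0, real k)]))"

definition Xi :: "nat \<Rightarrow> nat \<Rightarrow> real list set" where
  "Xi k i = tshift (real k) (real i) (X0 k)"

definition idx :: "nat \<Rightarrow> nat set \<Rightarrow> nat \<Rightarrow> nat" where
  "idx k I t = (let is = sorted_list_of_set I in
                if t < length is then is ! t else is ! 0 + k)"

definition Cblock :: "nat \<Rightarrow> nat set \<Rightarrow> nat \<Rightarrow> nat \<Rightarrow> (real \<times> real) list" where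
  "Cblock k I s t =
     (let a = idx k I t; b = idx k I (Suc t) in
       (if t = s then [] else [(real a, real a)])
       @ concat (map (\<lambda>j. [(real a, real j), (real a, real j)]) [Suc a..<b])
       @ [(real a, real b)])"

definition CIs :: "nat \<Rightarrow> nat set \<Rightarrow> nat \<Rightarrow> real list set" where
  "CIs k I s = tbox (real k) (concat (map (Cblock k I s) [0..<card I]))"

end

theory Submission
  imports Defs
begin


lemma tred_unique:
  fixes k :: real and z :: int
  assumes "k > 0" "0 \<le> t - k * z" "t - k * z < k"
  shows "tred k t = t - k * z"
proof -
  have "z \<le> t / k" using assms by (simp add: field_simps)
  moreover have "t / k < z + 1" using assms by (simp add: field_simps)
  ultimately have "\<lfloor>t / k\<rfloor> = z" by linarith
  thus ?thesis by (simp add: tred_def)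
qed

lemma tred_bounds:
  fixes k :: real assumes "k > 0"
  shows "0 \<le> tred k t" "tred k t < k"
proof -
  have a: "real_of_int \<lfloor>t/k\<rfloor> \<le> t/k" "t/k < real_of_int \<lfloor>t/k\<rfloor> + 1" by linarith+
  have "k * real_of_int \<lfloor>t/k\<rfloor> \<le> k * (t/k)" using a(1) assms by (intro mult_left_mono) auto
  thus "0 \<le> tred k t" using assms by (simp add: tred_def)
  have "k * (t/k) < k * (real_of_int \<lfloor>t/k\<rfloor> + 1)" using a(2) assms by (intro mult_strict_left_mono) auto
  thus "tred k t < k" using assms by (simp add: tred_def algebra_simps)
qed

lemma tred_decomp:
  fixes k :: real assumes "k > 0"
  obtains z :: int where "t = tred k t + k * z"
  by (rule that[of "\<lfloor>t/k\<rfloor>"]) (simp add: tred_def)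

lemma tred_shift_int:
  fixes k :: real and z :: int assumes "k > 0"
  shows "tred k (t + k * z) = tred k t"
proof -
  obtain w :: int where w: "t = tred k t + k * w" using tred_decomp assms by blast
  have "tred k (t + k*z) = (t + k*z) - k * (w + z)"
    using tred_bounds[OF assms, of t] w by (intro tred_unique) (auto simp: algebra_simps)
  thus ?thesis using w by (simp add: algebra_simps)
qed

lemma tred_id: fixes k :: real assumes "k > 0" "0 \<le> t" "t < k" shows "tred k t = t"
  using tred_unique[of k t 0] assms by simp

lemma tred_le_self: fixes k :: real assumes "k > 0" "0 \<le> t" shows "tred k t \<le> t"
proof -
  have "0 \<le> t/k" using assms by simp
  hence "0 \<le> \<lfloor>t/k\<rfloor>" by simp
  hence "0 \<le> k * real_of_int \<lfloor>t/k\<rfloor>" using assms by simp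
  thus ?thesis by (simp add: tred_def)
qed

lemma tred_tred_add: fixes k :: real assumes "k > 0"
  shows "tred k (tred k t + c) = tred k (t + c)"
proof -
  obtain w :: int where w: "t = tred k t + k * w" using tred_decomp assms by blast
  have "tred k (t + c) = tred k ((tred k t + c) + k * w)" using w by (metis add.commute add.left_commute)
  thus ?thesis using tred_shift_int[OF assms] by simp
qed

definition dd :: "real \<Rightarrow> real \<Rightarrow> real \<Rightarrow> real" where
  "dd k a v = tred k (v - a)"

lemma dd_bounds: "k > 0 \<Longrightarrow> 0 \<le> dd k a v" "k > 0 \<Longrightarrow> dd k a v < k"
  using tred_bounds by (auto simp: dd_def)

lemma dd_period: fixes z :: int assumes "k > 0" shows "dd k (a + k * z) v = dd k a v"
proof -
  have e: "v - (a + k*z) = (v - a) + k * of_int (-z)" by simp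
  show ?thesis unfolding dd_def e tred_shift_int[OF assms] ..
qed

lemma dd_period1: assumes "k > 0" shows "dd k (a + k) v = dd k a v"
  using dd_period[OF assms, of a 1] by simp

lemma dd_R3: assumes "k > 0" "0 \<le> \<delta>" "\<delta> \<le> dd k a v"
  shows "dd k (a + \<delta>) v = dd k a v - \<delta>"
proof -
  obtain w :: int where w: "v - a = tred k (v - a) + k * w" using tred_decomp assms(1) by blast
  have "tred k (v - (a+\<delta>)) = (v - (a + \<delta>)) - k * w"
    using assms dd_bounds[OF assms(1), of a v] w unfolding dd_def
    by (intro tred_unique) (auto simp: algebra_simps)
  thus ?thesis using w by (simp add: dd_def algebra_simps)
qed

lemma dd_R4: assumes "k > 0" "\<delta> \<le> k" "dd k a v < \<delta>"
  shows "dd k (a + \<delta>) v = dd k a v - \<delta> + k"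
proof -
  obtain w :: int where w: "v - a = tred k (v - a) + k * w" using tred_decomp assms(1) by blast
  have "tred k (v - (a+\<delta>)) = (v - (a + \<delta>)) - k * (w - 1)"
    using assms dd_bounds[OF assms(1), of a v] w unfolding dd_def
    by (intro tred_unique) (auto simp: algebra_simps)
  thus ?thesis using w by (simp add: dd_def algebra_simps)
qed

lemma dd_R5: assumes "k > 0" "0 \<le> \<delta>"
  shows "dd k a v \<le> dd k (a + \<delta>) v + \<delta>"
proof (cases "\<delta> \<le> dd k a v")
  case True thus ?thesis using dd_R3[OF assms True] by simp
next
  case False thus ?thesis using dd_bounds[OF assms(1), of "a+\<delta>" v] by simp
qed

lemma arc_iff:
  fixes k :: real
  assumes "k > 0" "0 \<le> v" "v < k" "a \<le> b"
  shows "v \<in> tred k ` {a..b} \<longleftrightarrow> dd k a v \<le> b - a"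
proof
  assume "v \<in> tred k ` {a..b}"
  then obtain y where y: "a \<le> y" "y \<le> b" "v = tred k y" by auto
  obtain w :: int where w: "y = tred k y + k * w" using tred_decomp assms(1) by blast
  have e: "v - a = (y - a) + k * of_int (-w)" using y(3) w by (simp add: algebra_simps)
  have "dd k a v = tred k ((y - a) + k * of_int (-w))" unfolding dd_def e ..
  also have "\<dots> = tred k (y - a)" by (rule tred_shift_int[OF assms(1)])
  also have "\<dots> \<le> y - a" using tred_le_self[OF assms(1)] y by simp
  finally show "dd k a v \<le> b - a" using y by simp
next
  assume h: "dd k a v \<le> b - a"
  let ?y = "a + dd k a v"
  have "?y \<in> {a..b}" using h dd_bounds[OF assms(1), of a v] by auto
  moreover have "tred k ?y = v"
  proof -
    obtain w :: int where w: "v - a = tred k (v - a) + k * w" using tred_decomp assms(1) by blast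
    have "?y = v + k * (-w)" using w by (simp add: dd_def algebra_simps)
    hence "tred k ?y = tred k (v + k * of_int (-w))" by simp
    also have "\<dots> = tred k v" by (rule tred_shift_int[OF assms(1)])
    finally have "tred k ?y = tred k v" .
    thus ?thesis using tred_id[OF assms(1-3)] by simp
  qed
  ultimately show "v \<in> tred k ` {a..b}" by (metis image_eqI)
qed



lemma chain_hall_nec:
  fixes dP :: "'a \<Rightarrow> real" and eQ :: "'b \<Rightarrow> real"
  assumes "bij_betw f Q P" "\<forall>q\<in>Q. dP (f q) \<le> eQ q" "finite P"
  shows "card {q\<in>Q. eQ q \<le> t} \<le> card {p\<in>P. dP p \<le> t}"
proof -
  have "inj_on f {q\<in>Q. eQ q \<le> t}" using assms(1) unfolding bij_betw_def by (auto intro: inj_on_subset)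
  moreover have "f ` {q\<in>Q. eQ q \<le> t} \<subseteq> {p\<in>P. dP p \<le> t}" using assms(1,2) unfolding bij_betw_def by force
  ultimately show ?thesis using assms(3) by (intro card_inj_on_le) auto
qed

lemma chain_hall_suff:
  fixes dP :: "'a \<Rightarrow> real" and eQ :: "'b \<Rightarrow> real"
  assumes "finite P" "finite Q" "card P = card Q"
    "\<forall>t. card {q\<in>Q. eQ q \<le> t} \<le> card {p\<in>P. dP p \<le> t}"
  shows "\<exists>f. bij_betw f Q P \<and> (\<forall>q\<in>Q. dP (f q) \<le> eQ q)"
  using assms
proof (induct "card Q" arbitrary: P Q)
  case 0
  hence "Q = {}" "P = {}" by auto
  thus ?case by (auto simp: bij_betw_def)
next
  case (Suc n)
  hence Qne: "Q \<noteq> {}" and Pne: "P \<noteq> {}" by auto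
  obtain q0 where q0: "q0 \<in> Q" "\<forall>q\<in>Q. eQ q \<le> eQ q0"
  proof -
    have "Max (eQ ` Q) \<in> eQ ` Q" using Qne Suc.prems by auto
    then obtain q0 where "q0 \<in> Q" "eQ q0 = Max (eQ ` Q)" by auto
    moreover have "\<forall>q\<in>Q. eQ q \<le> Max (eQ ` Q)" using Suc.prems by auto
    ultimately show ?thesis using that by auto
  qed
  obtain p0 where p0: "p0 \<in> P" "\<forall>p\<in>P. dP p \<le> dP p0"
  proof -
    have "Max (dP ` P) \<in> dP ` P" using Pne Suc.prems by auto
    then obtain p0 where "p0 \<in> P" "dP p0 = Max (dP ` P)" by auto
    moreover have "\<forall>p\<in>P. dP p \<le> Max (dP ` P)" using Suc.prems by auto
    ultimately show ?thesis using that by auto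
  qed
  have allle: "\<forall>p\<in>P. dP p \<le> eQ q0"
  proof -
    have "{q\<in>Q. eQ q \<le> eQ q0} = Q" using q0 by auto
    hence "card Q \<le> card {p\<in>P. dP p \<le> eQ q0}" using Suc.prems(4) by metis
    hence "card P \<le> card {p\<in>P. dP p \<le> eQ q0}" using Suc.prems(3) by simp
    hence "{p\<in>P. dP p \<le> eQ q0} = P" using Suc.prems(1)
      by (metis (no_types, lifting) card_seteq finite_subset mem_Collect_eq subsetI)
    thus ?thesis by blast
  qed
  define P' where "P' = P - {p0}"
  define Q' where "Q' = Q - {q0}"
  have cQ': "n = card Q'" using Suc.hyps(2) q0(1) Suc.prems(2) unfolding Q'_def by simp
  have cP': "card P' = card Q'" using Suc.prems(3) p0(1) q0(1) Suc.prems(1,2) unfolding P'_def Q'_def by simp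
  have cond': "\<forall>t. card {q\<in>Q'. eQ q \<le> t} \<le> card {p\<in>P'. dP p \<le> t}"
  proof
    fix t
    show "card {q\<in>Q'. eQ q \<le> t} \<le> card {p\<in>P'. dP p \<le> t}"
    proof (cases "dP p0 \<le> t")
      case True
      hence "{p\<in>P'. dP p \<le> t} = P'" using p0 unfolding P'_def by force
      moreover have "card {q\<in>Q'. eQ q \<le> t} \<le> card Q'" using Suc.prems(2) unfolding Q'_def
        by (intro card_mono) auto
      ultimately show ?thesis using cP' by simp
    next
      case False
      hence "{p\<in>P'. dP p \<le> t} = {p\<in>P. dP p \<le> t}" unfolding P'_def by auto
      moreover have "{q\<in>Q'. eQ q \<le> t} = {q\<in>Q. eQ q \<le> t}"
        using False allle p0(1) unfolding Q'_def by auto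
      ultimately show ?thesis using Suc.prems(4) by metis
    qed
  qed
  obtain f where f: "bij_betw f Q' P'" "\<forall>q\<in>Q'. dP (f q) \<le> eQ q"
    using Suc.hyps(1)[OF cQ' _ _ cP' cond'] Suc.prems(1,2) unfolding P'_def Q'_def by auto
  define g where "g = f(q0 := p0)"
  have "bij_betw g Q' P'" using f(1) unfolding g_def Q'_def by (rule bij_betw_cong[THEN iffD1, rotated]) auto
  moreover have "bij_betw g {q0} {p0}" unfolding g_def by simp
  ultimately have "bij_betw g (Q' \<union> {q0}) (P' \<union> {p0})" by (rule bij_betw_combine) (auto simp: P'_def)
  moreover have "Q' \<union> {q0} = Q" "P' \<union> {p0} = P" using q0 p0 unfolding Q'_def P'_def by auto
  moreover have "\<forall>q\<in>Q. dP (g q) \<le> eQ q" using f(2) allle p0(1) unfolding g_def Q'_def by auto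
  ultimately show ?case by auto
qed

definition Mt :: "real \<Rightarrow> (nat \<Rightarrow> real) \<Rightarrow> nat set \<Rightarrow> (real \<times> real) list \<Rightarrow> bool" where
  "Mt k val P B \<longleftrightarrow> (\<exists>f. bij_betw f {..<length B} P \<and>
      (\<forall>j<length B. dd k (fst (B!j)) (val (f j)) \<le> snd (B!j) - fst (B!j)))"

lemma Mt_finite: "Mt k val P B \<Longrightarrow> finite P"
  unfolding Mt_def using bij_betw_finite by blast

lemma Mt_card: "Mt k val P B \<Longrightarrow> card P = length B"
  unfolding Mt_def using bij_betw_same_card by fastforce

lemma Mt_chain:
  assumes "\<forall>j<length B. fst (B!j) = a" "finite P"
  shows "Mt k val P B \<longleftrightarrow> card P = length B \<and>
     (\<forall>t. card {j. j < length B \<and> snd (B!j) - a \<le> t} \<le> card {p\<in>P. dd k a (val p) \<le> t})"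
proof
  assume "Mt k val P B"
  then obtain f where f: "bij_betw f {..<length B} P"
    "\<forall>j<length B. dd k (fst (B!j)) (val (f j)) \<le> snd (B!j) - fst (B!j)" unfolding Mt_def by blast
  have "card P = length B" using f(1) bij_betw_same_card by fastforce
  moreover have "card {j\<in>{..<length B}. snd (B!j) - a \<le> t} \<le> card {p\<in>P. dd k a (val p) \<le> t}" for t
    using chain_hall_nec[OF f(1), of "\<lambda>p. dd k a (val p)" "\<lambda>j. snd (B!j) - a"] f(2) assms by auto
  ultimately show "card P = length B \<and>
     (\<forall>t. card {j. j < length B \<and> snd (B!j) - a \<le> t} \<le> card {p\<in>P. dd k a (val p) \<le> t})"
    by (simp add: lessThan_def)
next
  assume h: "card P = length B \<and>
     (\<forall>t. card {j. j < length B \<and> snd (B!j) - a \<le> t} \<le> card {p\<in>P. dd k a (val p) \<le> t})"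
  have "\<exists>f. bij_betw f {..<length B} P \<and> (\<forall>q\<in>{..<length B}. dd k a (val (f q)) \<le> snd (B!q) - a)"
    using h assms(2) by (intro chain_hall_suff) (auto simp: lessThan_def)
  thus "Mt k val P B" unfolding Mt_def using assms(1) by auto
qed

lemma Mt_append:
  "Mt k val P (B1 @ B2) \<longleftrightarrow> (\<exists>P1 P2. P = P1 \<union> P2 \<and> P1 \<inter> P2 = {} \<and> Mt k val P1 B1 \<and> Mt k val P2 B2)"
proof
  let ?n1 = "length B1" and ?n2 = "length B2"
  assume "Mt k val P (B1 @ B2)"
  then obtain f where f: "bij_betw f {..<?n1 + ?n2} P"
    "\<forall>j<?n1 + ?n2. dd k (fst ((B1@B2)!j)) (val (f j)) \<le> snd ((B1@B2)!j) - fst ((B1@B2)!j)"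
    unfolding Mt_def by auto
  define P1 where "P1 = f ` {..<?n1}"
  define P2 where "P2 = f ` {?n1..<?n1 + ?n2}"
  have u: "{..<?n1 + ?n2} = {..<?n1} \<union> {?n1..<?n1 + ?n2}" by auto
  have "P = P1 \<union> P2" using f(1) unfolding P1_def P2_def bij_betw_def u by auto
  moreover have "P1 \<inter> P2 = {}"
  proof -
    have "P1 \<inter> P2 = f ` ({..<?n1} \<inter> {?n1..<?n1 + ?n2})" unfolding P1_def P2_def
      using f(1) unfolding bij_betw_def by (intro inj_on_image_Int[symmetric]) auto
    thus ?thesis by auto
  qed
  moreover have "Mt k val P1 B1"
  proof -
    have "bij_betw f {..<?n1} P1" unfolding P1_def by (rule bij_betw_subset[OF f(1)]) auto
    moreover have "\<forall>j<?n1. dd k (fst (B1!j)) (val (f j)) \<le> snd (B1!j) - fst (B1!j)"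
    proof (intro allI impI)
      fix j assume "j < ?n1"
      thus "dd k (fst (B1!j)) (val (f j)) \<le> snd (B1!j) - fst (B1!j)"
        using f(2)[rule_format, of j] by (simp add: nth_append)
    qed
    ultimately show ?thesis unfolding Mt_def by auto
  qed
  moreover have "Mt k val P2 B2"
  proof -
    have b1: "bij_betw (\<lambda>j. j + ?n1) {..<?n2} {?n1..<?n1 + ?n2}"
    proof -
      have "x \<in> (\<lambda>j. j + ?n1) ` {..<?n2}" if "?n1 \<le> x" "x < ?n1 + ?n2" for x
        using that by (intro image_eqI[of _ _ "x - ?n1"]) auto
      thus ?thesis unfolding bij_betw_def by (auto simp: inj_on_def)
    qed
    have b2: "bij_betw f {?n1..<?n1 + ?n2} P2" unfolding P2_def by (rule bij_betw_subset[OF f(1)]) auto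
    have "bij_betw (f \<circ> (\<lambda>j. j + ?n1)) {..<?n2} P2" by (rule bij_betw_trans[OF b1 b2])
    moreover have "\<forall>j<?n2. dd k (fst (B2!j)) (val ((f \<circ> (\<lambda>j. j + ?n1)) j)) \<le> snd (B2!j) - fst (B2!j)"
    proof (intro allI impI)
      fix j assume "j < ?n2"
      thus "dd k (fst (B2!j)) (val ((f \<circ> (\<lambda>j. j + ?n1)) j)) \<le> snd (B2!j) - fst (B2!j)"
        using f(2)[rule_format, of "j + ?n1"] by (simp add: nth_append)
    qed
    ultimately show ?thesis unfolding Mt_def by blast
  qed
  ultimately show "\<exists>P1 P2. P = P1 \<union> P2 \<and> P1 \<inter> P2 = {} \<and> Mt k val P1 B1 \<and> Mt k val P2 B2" by blast
next
  let ?n1 = "length B1" and ?n2 = "length B2"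
  assume "\<exists>P1 P2. P = P1 \<union> P2 \<and> P1 \<inter> P2 = {} \<and> Mt k val P1 B1 \<and> Mt k val P2 B2"
  then obtain P1 P2 f1 f2 where h: "P = P1 \<union> P2" "P1 \<inter> P2 = {}"
    "bij_betw f1 {..<?n1} P1" "\<forall>j<?n1. dd k (fst (B1!j)) (val (f1 j)) \<le> snd (B1!j) - fst (B1!j)"
    "bij_betw f2 {..<?n2} P2" "\<forall>j<?n2. dd k (fst (B2!j)) (val (f2 j)) \<le> snd (B2!j) - fst (B2!j)"
    unfolding Mt_def by blast
  define f where "f j = (if j < ?n1 then f1 j else f2 (j - ?n1))" for j
  have "bij_betw f {..<?n1} P1" using h(3) unfolding f_def by (rule bij_betw_cong[THEN iffD1, rotated]) auto
  moreover have "bij_betw f {?n1..<?n1 + ?n2} P2"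
  proof -
    have b1: "bij_betw (\<lambda>j. j - ?n1) {?n1..<?n1 + ?n2} {..<?n2}"
      unfolding bij_betw_def by (auto simp: inj_on_def image_iff intro!: bexI[of _ "x + ?n1" for x])
    have "bij_betw (f2 \<circ> (\<lambda>j. j - ?n1)) {?n1..<?n1 + ?n2} P2" by (rule bij_betw_trans[OF b1 h(5)])
    thus ?thesis unfolding f_def by (rule bij_betw_cong[THEN iffD1, rotated]) auto
  qed
  ultimately have "bij_betw f ({..<?n1} \<union> {?n1..<?n1 + ?n2}) (P1 \<union> P2)" using h(2) by (rule bij_betw_combine)
  moreover have "{..<?n1} \<union> {?n1..<?n1 + ?n2} = {..<length (B1 @ B2)}" by auto
  moreover have "\<forall>j<length (B1@B2). dd k (fst ((B1@B2)!j)) (val (f j)) \<le> snd ((B1@B2)!j) - fst ((B1@B2)!j)"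
  proof (intro allI impI)
    fix j assume j: "j < length (B1@B2)"
    show "dd k (fst ((B1@B2)!j)) (val (f j)) \<le> snd ((B1@B2)!j) - fst ((B1@B2)!j)"
    proof (cases "j < ?n1")
      case True thus ?thesis using h(4) by (simp add: f_def nth_append)
    next
      case False thus ?thesis using h(6)[rule_format, of "j - ?n1"] j by (simp add: f_def nth_append)
    qed
  qed
  ultimately show "Mt k val P (B1 @ B2)" unfolding Mt_def h(1) by metis
qed



lemma Mt_Nil: "Mt k val P [] \<longleftrightarrow> P = {}"
  unfolding Mt_def by (auto simp: bij_betw_def)

lemma Mt_concat:
  "Mt k val P (concat (map blk [0..<l])) \<longleftrightarrow>
    (\<exists>Pf. (\<forall>t<l. \<forall>r<l. t \<noteq> r \<longrightarrow> Pf t \<inter> Pf r = {}) \<and> (\<Union>t<l. Pf t) = P \<and> (\<forall>t<l. Mt k val (Pf t) (blk t)))"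
proof (induct l arbitrary: P)
  case 0
  have e1: "Mt k val P (concat (map blk [0..<0])) \<longleftrightarrow> P = {}" by (simp add: Mt_Nil)
  have e2: "(\<Union>t<(0::nat). Pf t) = {}" for Pf :: "nat \<Rightarrow> nat set" by simp
  show ?case unfolding e1 e2 by auto
next
  case (Suc l)
  have e: "concat (map blk [0..<Suc l]) = concat (map blk [0..<l]) @ blk l" by simp
  show ?case
  proof
    assume "Mt k val P (concat (map blk [0..<Suc l]))"
    then obtain P1 P2 where h: "P = P1 \<union> P2" "P1 \<inter> P2 = {}" "Mt k val P1 (concat (map blk [0..<l]))"
      "Mt k val P2 (blk l)" unfolding e Mt_append by blast
    obtain Pf where Pf: "\<forall>t<l. \<forall>r<l. t \<noteq> r \<longrightarrow> Pf t \<inter> Pf r = {}" "(\<Union>t<l. Pf t) = P1"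
      "\<forall>t<l. Mt k val (Pf t) (blk t)" using Suc.hyps[THEN iffD1, OF h(3)] by blast
    define Pg where "Pg = Pf(l := P2)"
    have "\<forall>t<Suc l. \<forall>r<Suc l. t \<noteq> r \<longrightarrow> Pg t \<inter> Pg r = {}"
    proof (intro allI impI)
      fix t r assume a: "t < Suc l" "r < Suc l" "t \<noteq> r"
      have sub: "Pf t \<subseteq> P1" if "t < l" for t using Pf(2) that by blast
      show "Pg t \<inter> Pg r = {}"
      proof (cases "t = l")
        case True
        hence "r < l" using a by simp
        thus ?thesis using True sub[of r] h(2) unfolding Pg_def by auto
      next
        case False
        hence t: "t < l" using a by simp
        show ?thesis
        proof (cases "r = l")
          case True
          thus ?thesis using t sub[of t] h(2) unfolding Pg_def by auto
        next
          case False
          hence "r < l" using a by simp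
          thus ?thesis using t a(3) Pf(1) \<open>t \<noteq> l\<close> False unfolding Pg_def by simp
        qed
      qed
    qed
    moreover have "(\<Union>t<Suc l. Pg t) = P"
    proof -
      have "(\<Union>t<Suc l. Pg t) = (\<Union>t<l. Pg t) \<union> Pg l" by (simp add: lessThan_Suc Un_commute)
      also have "(\<Union>t<l. Pg t) = (\<Union>t<l. Pf t)" unfolding Pg_def by (intro SUP_cong) auto
      finally show ?thesis using Pf(2) h(1) unfolding Pg_def by simp
    qed
    moreover have "\<forall>t<Suc l. Mt k val (Pg t) (blk t)"
    proof (intro allI impI)
      fix t assume "t < Suc l"
      thus "Mt k val (Pg t) (blk t)" using Pf(3) h(4) unfolding Pg_def by (cases "t = l") auto
    qed
    ultimately show "\<exists>Pf. (\<forall>t<Suc l. \<forall>r<Suc l. t \<noteq> r \<longrightarrow> Pf t \<inter> Pf r = {}) \<and> (\<Union>t<Suc l. Pf t) = P \<and>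
      (\<forall>t<Suc l. Mt k val (Pf t) (blk t))" by blast
  next
    assume "\<exists>Pf. (\<forall>t<Suc l. \<forall>r<Suc l. t \<noteq> r \<longrightarrow> Pf t \<inter> Pf r = {}) \<and> (\<Union>t<Suc l. Pf t) = P \<and>
      (\<forall>t<Suc l. Mt k val (Pf t) (blk t))"
    then obtain Pf where Pf: "\<forall>t<Suc l. \<forall>r<Suc l. t \<noteq> r \<longrightarrow> Pf t \<inter> Pf r = {}" "(\<Union>t<Suc l. Pf t) = P"
      "\<forall>t<Suc l. Mt k val (Pf t) (blk t)" by blast
    have "\<exists>Pf'. (\<forall>t<l. \<forall>r<l. t \<noteq> r \<longrightarrow> Pf' t \<inter> Pf' r = {}) \<and> (\<Union>t<l. Pf' t) = (\<Union>t<l. Pf t) \<and> (\<forall>t<l. Mt k val (Pf' t) (blk t))"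
      using Pf(1,3) by (intro exI[of _ Pf]) simp
    hence "Mt k val (\<Union>t<l. Pf t) (concat (map blk [0..<l]))" by (rule Suc.hyps[THEN iffD2])
    moreover have "Mt k val (Pf l) (blk l)" using Pf(3) by auto
    moreover have "(\<Union>t<l. Pf t) \<inter> Pf l = {}"
    proof -
      have "Pf t \<inter> Pf l = {}" if "t < l" for t using Pf(1) that by simp
      thus ?thesis by blast
    qed
    moreover have "P = (\<Union>t<l. Pf t) \<union> Pf l" using Pf(2) by (simp add: lessThan_Suc Un_commute)
    ultimately show "Mt k val P (concat (map blk [0..<Suc l]))" unfolding e Mt_append by blast
  qed
qed

definition inT :: "real \<Rightarrow> real list \<Rightarrow> bool" where
  "inT k x \<longleftrightarrow> (\<forall>j<length x. 0 \<le> x!j \<and> x!j < k)"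

lemma tbox_iff:
  assumes "k > 0" "\<forall>q\<in>set B. fst q \<le> snd q"
  shows "y \<in> tbox k B \<longleftrightarrow> length y = length B \<and> inT k y \<and>
     (\<forall>j<length B. dd k (fst (B!j)) (y!j) \<le> snd (B!j) - fst (B!j))"
proof
  assume "y \<in> tbox k B"
  then obtain z where z: "z \<in> box B" "y = tproj k z" unfolding tbox_def by auto
  have lz: "length z = length B" using z(1) unfolding box_def by auto
  have ly: "length y = length B" using z lz unfolding tproj_def by auto
  have yj: "y!j = tred k (z!j)" if "j < length B" for j using z(2) lz that unfolding tproj_def by auto
  have "inT k y" unfolding inT_def using yj ly tred_bounds[OF assms(1)] by auto
  moreover have "dd k (fst (B!j)) (y!j) \<le> snd (B!j) - fst (B!j)" if j: "j < length B" for j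
  proof -
    have "y!j \<in> tred k ` {fst (B!j)..snd (B!j)}" using yj[OF j] z(1) j unfolding box_def by auto
    moreover have "fst (B!j) \<le> snd (B!j)" using assms(2) j by auto
    ultimately show ?thesis using arc_iff[OF assms(1)] `inT k y` ly j unfolding inT_def by auto
  qed
  ultimately show "length y = length B \<and> inT k y \<and>
     (\<forall>j<length B. dd k (fst (B!j)) (y!j) \<le> snd (B!j) - fst (B!j))" using ly by auto
next
  assume h: "length y = length B \<and> inT k y \<and>
     (\<forall>j<length B. dd k (fst (B!j)) (y!j) \<le> snd (B!j) - fst (B!j))"
  have ex: "\<exists>w. w \<in> {fst (B!j)..snd (B!j)} \<and> tred k w = y!j" if j: "j < length B" for j
  proof -
    have "y!j \<in> tred k ` {fst (B!j)..snd (B!j)}"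
      using arc_iff[OF assms(1), of "y!j" "fst (B!j)" "snd (B!j)"] h assms(2) j unfolding inT_def by auto
    thus ?thesis by auto
  qed
  define z where "z = map (\<lambda>j. SOME w. w \<in> {fst (B!j)..snd (B!j)} \<and> tred k w = y!j) [0..<length B]"
  have zj: "z!j \<in> {fst (B!j)..snd (B!j)} \<and> tred k (z!j) = y!j" if "j < length B" for j
    using someI_ex[OF ex[OF that]] that unfolding z_def by auto
  have "z \<in> box B" unfolding box_def using zj by (auto simp: z_def)
  moreover have "y = tproj k z" unfolding tproj_def using zj h by (auto simp: z_def intro!: nth_equalityI)
  ultimately show "y \<in> tbox k B" unfolding tbox_def by auto
qed

lemma symclos_tbox:
  assumes "k > 0" "\<forall>q\<in>set B. fst q \<le> snd q"
  shows "x \<in> symclos (tbox k B) \<longleftrightarrow> length x = length B \<and> inT k x \<and> Mt k (\<lambda>p. x!p) {..<length x} B"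
proof
  assume "x \<in> symclos (tbox k B)"
  then obtain y \<sigma> where h: "x = permute_list \<sigma> y" "y \<in> tbox k B" "\<sigma> permutes {..<length y}"
    unfolding symclos_def by auto
  have y: "length y = length B" "inT k y" "\<forall>j<length B. dd k (fst (B!j)) (y!j) \<le> snd (B!j) - fst (B!j)"
    using h(2) tbox_iff[OF assms] by auto
  have lx: "length x = length y" using h(1) by simp
  have xi: "x!i = y!(\<sigma> i)" if "i < length y" for i using permute_list_nth[OF h(3) that] h(1) by simp
  have sig: "\<sigma> i < length y" if "i < length y" for i using permutes_in_image[OF h(3)] that by auto
  have "inT k x" unfolding inT_def using y(2) xi sig lx unfolding inT_def by auto
  moreover have "Mt k (\<lambda>p. x!p) {..<length x} B"
  proof -
    have pi: "inv \<sigma> permutes {..<length y}" by (rule permutes_inv[OF h(3)])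
    have "bij_betw (inv \<sigma>) {..<length B} {..<length x}" using permutes_imp_bij[OF pi] lx y(1) by simp
    moreover have "dd k (fst (B!j)) (x!(inv \<sigma> j)) \<le> snd (B!j) - fst (B!j)" if j: "j < length B" for j
    proof -
      have "inv \<sigma> j < length y" using permutes_in_image[OF pi] j y(1) by auto
      hence "x!(inv \<sigma> j) = y!j" using xi permutes_inverses(1)[OF h(3)] by simp
      thus ?thesis using y(3) j by simp
    qed
    ultimately show ?thesis unfolding Mt_def by blast
  qed
  ultimately show "length x = length B \<and> inT k x \<and> Mt k (\<lambda>p. x!p) {..<length x} B" using lx y(1) by simp
next
  assume h: "length x = length B \<and> inT k x \<and> Mt k (\<lambda>p. x!p) {..<length x} B"
  let ?n = "length x"
  obtain f where f: "bij_betw f {..<?n} {..<?n}" "\<forall>j<?n. dd k (fst (B!j)) (x!(f j)) \<le> snd (B!j) - fst (B!j)"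
    using h unfolding Mt_def by auto
  define g where "g j = (if j < ?n then f j else j)" for j
  have gb: "bij_betw g {..<?n} {..<?n}" using f(1) unfolding g_def by (rule bij_betw_cong[THEN iffD1, rotated]) auto
  have gp: "g permutes {..<?n}" by (rule bij_imp_permutes[OF gb]) (auto simp: g_def)
  define y where "y = permute_list g x"
  have ly: "length y = ?n" unfolding y_def by simp
  have yj: "y!j = x!(f j)" if "j < ?n" for j unfolding y_def using permute_list_nth[OF gp that] that by (simp add: g_def)
  have fj: "f j < ?n" if "j < ?n" for j using f(1) that unfolding bij_betw_def by auto
  have "y \<in> tbox k B"
    unfolding tbox_iff[OF assms] using ly h yj f(2) fj unfolding inT_def by auto
  moreover have "x = permute_list (inv g) y"
  proof (rule nth_equalityI)
    show "length x = length (permute_list (inv g) y)" using ly by simp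
    fix i assume i: "i < length x"
    have pi: "inv g permutes {..<length y}" using permutes_inv[OF gp] ly by simp
    have "permute_list (inv g) y ! i = y ! (inv g i)" using permute_list_nth[OF pi] i ly by simp
    also have "\<dots> = x ! (g (inv g i))" unfolding y_def
      using permute_list_nth[OF gp] permutes_in_image[OF pi] i ly by simp
    also have "\<dots> = x!i" using permutes_inverses(1)[OF gp] by simp
    finally show "x!i = permute_list (inv g) y ! i" by simp
  qed
  moreover have "inv g permutes {..<length y}" using permutes_inv[OF gp] ly by simp
  ultimately show "x \<in> symclos (tbox k B)" unfolding symclos_def by blast
qed

lemma dd_tred_shift: assumes "k > 0" shows "dd k (a + c) (tred k (w + c)) = dd k a w"
  unfolding dd_def using tred_tred_add[OF assms, of "w + c" "-(a+c)"] by (simp add: algebra_simps)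

lemma tshift_symclos:
  assumes "k > 0" "\<forall>q\<in>set B. fst q \<le> snd q"
  shows "x \<in> tshift k c (symclos (tbox k B)) \<longleftrightarrow> length x = length B \<and> inT k x \<and>
     Mt k (\<lambda>p. x!p) {..<length x} (map (\<lambda>q. (fst q + c, snd q + c)) B)"
proof
  assume "x \<in> tshift k c (symclos (tbox k B))"
  then obtain w where w: "w \<in> symclos (tbox k B)" "x = tproj k (map (\<lambda>t. t + c) w)"
    unfolding tshift_def by auto
  have wh: "length w = length B" "inT k w" "Mt k (\<lambda>p. w!p) {..<length w} B" using w(1) symclos_tbox[OF assms] by auto
  have lx: "length x = length w" using w(2) unfolding tproj_def by simp
  have xp: "x!p = tred k (w!p + c)" if "p < length w" for p using w(2) that unfolding tproj_def by simp
  have "inT k x" unfolding inT_def using xp lx tred_bounds[OF assms(1)] by auto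
  moreover have "Mt k (\<lambda>p. x!p) {..<length x} (map (\<lambda>q. (fst q + c, snd q + c)) B)"
  proof -
    obtain f where f: "bij_betw f {..<length B} {..<length w}" "\<forall>j<length B. dd k (fst (B!j)) (w!(f j)) \<le> snd (B!j) - fst (B!j)"
      using wh(3) unfolding Mt_def by auto
    have fj: "f j < length w" if "j < length B" for j using f(1) that unfolding bij_betw_def by auto
    have "dd k (fst (B!j) + c) (x!(f j)) \<le> snd (B!j) + c - (fst (B!j) + c)" if j: "j < length B" for j
      using f(2) j xp[OF fj[OF j]] dd_tred_shift[OF assms(1)] by simp
    thus ?thesis unfolding Mt_def using f(1) lx by auto
  qed
  ultimately show "length x = length B \<and> inT k x \<and>
     Mt k (\<lambda>p. x!p) {..<length x} (map (\<lambda>q. (fst q + c, snd q + c)) B)" using lx wh(1) by simp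
next
  assume h: "length x = length B \<and> inT k x \<and>
     Mt k (\<lambda>p. x!p) {..<length x} (map (\<lambda>q. (fst q + c, snd q + c)) B)"
  define w where "w = map (\<lambda>t. tred k (t - c)) x"
  have lw: "length w = length B" using h unfolding w_def by simp
  have "inT k w" unfolding inT_def w_def using tred_bounds[OF assms(1)] by auto
  moreover have "Mt k (\<lambda>p. w!p) {..<length w} B"
  proof -
    obtain f where f: "bij_betw f {..<length B} {..<length x}"
      "\<forall>j<length B. dd k (fst (B!j) + c) (x!(f j)) \<le> snd (B!j) + c - (fst (B!j) + c)"
      using h unfolding Mt_def by auto
    have fj: "f j < length x" if "j < length B" for j using f(1) that unfolding bij_betw_def by auto
    have "dd k (fst (B!j)) (w!(f j)) = dd k (fst (B!j) + c) (x!(f j))" if j: "j < length B" for j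
    proof -
      have "dd k (fst (B!j) + c) (tred k ((x!(f j) - c) + c)) = dd k (fst (B!j)) (x!(f j) - c)"
        by (rule dd_tred_shift[OF assms(1)])
      moreover have "tred k ((x!(f j) - c) + c) = x!(f j)" using tred_id[OF assms(1)] h fj[OF j] unfolding inT_def by auto
      moreover have "dd k (fst (B!j)) (w!(f j)) = dd k (fst (B!j)) (tred k (x!(f j) - c))"
        unfolding w_def using fj[OF j] by simp
      moreover have "dd k (fst (B!j)) (tred k (x!(f j) - c)) = dd k (fst (B!j)) (x!(f j) - c)"
        unfolding dd_def using tred_tred_add[OF assms(1), of "x!(f j) - c" "- fst (B!j)"] by simp
      ultimately show ?thesis by simp
    qed
    thus ?thesis unfolding Mt_def using f lw h by auto
  qed
  ultimately have "w \<in> symclos (tbox k B)" using symclos_tbox[OF assms] lw by auto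
  moreover have "x = tproj k (map (\<lambda>t. t + c) w)"
    unfolding tproj_def w_def using tred_tred_add[OF assms(1)] tred_id[OF assms(1)] h unfolding inT_def
    by (auto intro!: nth_equalityI)
  ultimately show "x \<in> tshift k c (symclos (tbox k B))" unfolding tshift_def by auto
qed

lemma Mt_perm1:
  assumes "mset B = mset B'" "Mt k val P B'"
  shows "Mt k val P B"
proof -
  obtain p where p: "p permutes {..<length B'}" "permute_list p B' = B" using mset_eq_permutation[OF assms(1)] by blast
  have lB: "length B = length B'" using p(2) by auto
  obtain f where f: "bij_betw f {..<length B'} P" "\<forall>j<length B'. dd k (fst (B'!j)) (val (f j)) \<le> snd (B'!j) - fst (B'!j)"
    using assms(2) unfolding Mt_def by auto
  have "bij_betw (f \<circ> p) {..<length B} P" using bij_betw_trans[OF permutes_imp_bij[OF p(1)] f(1)] lB by simp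
  moreover have "\<forall>j<length B. dd k (fst (B!j)) (val ((f \<circ> p) j)) \<le> snd (B!j) - fst (B!j)"
  proof (intro allI impI)
    fix j assume j: "j < length B"
    have "B!j = B'!(p j)" using p permute_list_nth[OF p(1)] j lB by metis
    moreover have "p j < length B'" using permutes_in_image[OF p(1)] j lB by auto
    ultimately show "dd k (fst (B!j)) (val ((f \<circ> p) j)) \<le> snd (B!j) - fst (B!j)" using f(2) by simp
  qed
  ultimately show ?thesis unfolding Mt_def by blast
qed

lemma Mt_perm: "mset B = mset B' \<Longrightarrow> Mt k val P B \<longleftrightarrow> Mt k val P B'"
  using Mt_perm1[of B B'] Mt_perm1[of B' B] by metis



definition cb :: "nat \<Rightarrow> nat \<Rightarrow> bool \<Rightarrow> (real \<times> real) list" where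
  "cb a b f = (if f then [(real a, real a)] else []) @
     concat (map (\<lambda>j. [(real a, real j), (real a, real j)]) [Suc a..<b]) @ [(real a, real b)]"

lemma length_cb: "a < b \<Longrightarrow> length (cb a b f) = 2 * (b - a) - (if f then 0 else 1)"
proof -
  have "length (concat (map (\<lambda>j. [(real a, real j), (real a, real j)]) xs)) = 2 * length xs" for xs :: "nat list"
    by (induct xs) auto
  thus "a < b \<Longrightarrow> ?thesis" unfolding cb_def by auto
qed

lemma set_cb: "q \<in> set (cb a b f) \<Longrightarrow> a \<le> b \<Longrightarrow> fst q = real a \<and> (\<exists>n. snd q = real n \<and> a \<le> n \<and> n \<le> b)"
  unfolding cb_def by (auto split: if_splits)

lemma filter_concat_pairs:
  "length (filter P (concat (map (\<lambda>j. [g j, g j]) xs))) = 2 * length (filter (\<lambda>j. P (g j)) xs)"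
  by (induct xs) auto

lemma cnt_cb_m:
  assumes "m < b - a"
  shows "length (filter (\<lambda>q. snd q - real a \<le> real m) (cb a b f)) = 2 * m + (if f then 1 else 0)"
proof -
  have ab: "a < b" using assms by simp
  have split: "[Suc a..<b] = [Suc a..<Suc a + m] @ [Suc a + m..<b]"
    using upt_add_eq_append[of "Suc a" "Suc a + m" "b - (Suc a + m)"] assms by simp
  have f1: "filter (\<lambda>j. real j - real a \<le> real m) [Suc a..<Suc a + m] = [Suc a..<Suc a + m]"
    by (rule filter_True) auto
  have f2: "filter (\<lambda>j. real j - real a \<le> real m) [Suc a + m..<b] = []"
    by (rule filter_False) auto
  have "length (filter (\<lambda>j. real j - real a \<le> real m) [Suc a..<b]) = m"
    unfolding split filter_append f1 f2 by simp
  moreover have "\<not> (real b - real a \<le> real m)" using assms by linarith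
  ultimately show ?thesis unfolding cb_def using filter_concat_pairs[of "\<lambda>q. snd q - real a \<le> real m" "\<lambda>j. (real a, real j)"]
    by simp
qed

lemma cnt_cb_floor:
  assumes "0 \<le> \<tau>" "a \<le> b"
  shows "length (filter (\<lambda>q. snd q - real a \<le> \<tau>) (cb a b f)) =
         length (filter (\<lambda>q. snd q - real a \<le> real (nat \<lfloor>\<tau>\<rfloor>)) (cb a b f))"
proof -
  have "(snd q - real a \<le> \<tau>) = (snd q - real a \<le> real (nat \<lfloor>\<tau>\<rfloor>))" if q: "q \<in> set (cb a b f)" for q
  proof -
    obtain n where n: "snd q = real n" "a \<le> n" using set_cb[OF q assms(2)] by auto
    have "(real n - real a \<le> \<tau>) = (int (n - a) \<le> \<lfloor>\<tau>\<rfloor>)" using n(2) by (simp add: le_floor_iff of_nat_diff)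
    also have "\<dots> = (real n - real a \<le> real (nat \<lfloor>\<tau>\<rfloor>))" using n(2) assms(1)
      by (smt (verit, ccfv_SIG) floor_less_cancel le_nat_iff nat_0_le of_int_of_nat_eq of_nat_diff zero_le_floor of_nat_le_iff)
    finally show ?thesis using n by simp
  qed
  thus ?thesis by (metis (no_types, lifting) filter_cong)
qed

lemma cb_match:
  assumes "a < b" "finite Q"
  shows "Mt k val Q (cb a b f) \<longleftrightarrow>
    card Q = 2 * (b - a) - (if f then 0 else 1) \<and> (\<forall>p\<in>Q. dd k (real a) (val p) \<le> real (b - a)) \<and>
    (\<forall>m. m < b - a \<longrightarrow> 2 * m + (if f then 1 else 0) \<le> card {p\<in>Q. dd k (real a) (val p) \<le> real m})"
proof -
  let ?B = "cb a b f"
  have fst: "\<forall>j<length ?B. fst (?B!j) = real a"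
  proof (intro allI impI)
    fix j assume "j < length ?B"
    hence "?B!j \<in> set ?B" by (rule nth_mem)
    thus "fst (?B!j) = real a" using set_cb less_imp_le[OF assms(1)] by blast
  qed
  have cnt: "card {j. j < length ?B \<and> snd (?B!j) - real a \<le> \<tau>} = length (filter (\<lambda>q. snd q - real a \<le> \<tau>) ?B)" for \<tau>
    by (simp add: length_filter_conv_card)
  have MC: "Mt k val Q ?B \<longleftrightarrow> card Q = length ?B \<and>
     (\<forall>t. length (filter (\<lambda>q. snd q - real a \<le> t) ?B) \<le> card {p\<in>Q. dd k (real a) (val p) \<le> t})"
    unfolding Mt_chain[OF fst assms(2)] cnt ..
  have all_le: "length (filter (\<lambda>q. snd q - real a \<le> t) ?B) = length ?B" if "real (b - a) \<le> t" for t
  proof -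
    have "filter (\<lambda>q. snd q - real a \<le> t) ?B = ?B"
    proof (rule filter_True, rule ballI)
      fix q assume q: "q \<in> set ?B"
      obtain n where "snd q = real n" "n \<le> b" using set_cb[OF q less_imp_le[OF assms(1)]] by blast
      thus "snd q - real a \<le> t" using that assms(1) by (simp add: of_nat_diff)
    qed
    thus ?thesis by simp
  qed
  have neg: "length (filter (\<lambda>q. snd q - real a \<le> t) ?B) = 0" if "t < 0" for t
  proof -
    have "filter (\<lambda>q. snd q - real a \<le> t) ?B = []"
    proof (rule filter_False, rule ballI)
      fix q assume q: "q \<in> set ?B"
      obtain n where "snd q = real n" "a \<le> n" using set_cb[OF q less_imp_le[OF assms(1)]] by blast
      thus "\<not> snd q - real a \<le> t" using that by simp
    qed
    thus ?thesis by simp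
  qed
  show ?thesis
  proof
    assume "Mt k val Q ?B"
    hence h: "card Q = length ?B" "\<forall>t. length (filter (\<lambda>q. snd q - real a \<le> t) ?B) \<le> card {p\<in>Q. dd k (real a) (val p) \<le> t}"
      using MC by auto
    have "card Q = 2 * (b - a) - (if f then 0 else 1)" using h(1) length_cb assms(1) by simp
    moreover have "\<forall>p\<in>Q. dd k (real a) (val p) \<le> real (b - a)"
    proof -
      have "card Q \<le> card {p\<in>Q. dd k (real a) (val p) \<le> real (b - a)}"
        using h(1) h(2)[rule_format, of "real (b - a)"] all_le[of "real (b - a)"] by simp
      moreover have "{p\<in>Q. dd k (real a) (val p) \<le> real (b - a)} \<subseteq> Q" by blast
      ultimately have "{p\<in>Q. dd k (real a) (val p) \<le> real (b - a)} = Q" using assms(2) card_seteq by blast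
      thus ?thesis by blast
    qed
    moreover have "\<forall>m. m < b - a \<longrightarrow> 2 * m + (if f then 1 else 0) \<le> card {p\<in>Q. dd k (real a) (val p) \<le> real m}"
    proof (intro allI impI)
      fix m assume m: "m < b - a"
      show "2 * m + (if f then 1 else 0) \<le> card {p\<in>Q. dd k (real a) (val p) \<le> real m}"
        using h(2)[rule_format, of "real m"] cnt_cb_m[OF m, of f] by simp
    qed
    ultimately show "card Q = 2 * (b - a) - (if f then 0 else 1) \<and> (\<forall>p\<in>Q. dd k (real a) (val p) \<le> real (b - a)) \<and>
    (\<forall>m. m < b - a \<longrightarrow> 2 * m + (if f then 1 else 0) \<le> card {p\<in>Q. dd k (real a) (val p) \<le> real m})" by blast
  next
    assume h: "card Q = 2 * (b - a) - (if f then 0 else 1) \<and> (\<forall>p\<in>Q. dd k (real a) (val p) \<le> real (b - a)) \<and>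
    (\<forall>m. m < b - a \<longrightarrow> 2 * m + (if f then 1 else 0) \<le> card {p\<in>Q. dd k (real a) (val p) \<le> real m})"
    have "card Q = length ?B" using h length_cb assms(1) by simp
    moreover have "length (filter (\<lambda>q. snd q - real a \<le> t) ?B) \<le> card {p\<in>Q. dd k (real a) (val p) \<le> t}" for t
    proof (cases "t < 0")
      case True thus ?thesis using neg by simp
    next
      case False
      show ?thesis
      proof (cases "real (b - a) \<le> t")
        case True
        hence "{p\<in>Q. dd k (real a) (val p) \<le> t} = Q" using h by fastforce
        thus ?thesis using all_le[OF True] `card Q = length ?B` by simp
      next
        case False2: False
        let ?m = "nat \<lfloor>t\<rfloor>"
        have m: "?m < b - a" using False2 False by linarith
        have "length (filter (\<lambda>q. snd q - real a \<le> t) ?B) = 2 * ?m + (if f then 1 else 0)"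
          using cnt_cb_floor[of t a b f] False assms(1) cnt_cb_m[OF m] by simp
        also have "\<dots> \<le> card {p\<in>Q. dd k (real a) (val p) \<le> real ?m}" using h m by simp
        also have "\<dots> \<le> card {p\<in>Q. dd k (real a) (val p) \<le> t}"
          using assms(2) False by (intro card_mono) (auto intro: order_trans[OF _ of_int_floor_le])
        finally show ?thesis .
      qed
    qed
    ultimately show "Mt k val Q ?B" using MC by blast
  qed
qed



lemma setA1:
  assumes "K > 0" "0 \<le> \<delta>" "0 \<le> m" "\<delta> + m \<le> K"
  shows "(dd K a v < \<delta> + m) \<longleftrightarrow> (dd K a v < \<delta> \<or> dd K (a + \<delta>) v < m)"
    "dd K a v < \<delta> \<Longrightarrow> \<not> dd K (a + \<delta>) v < m"
proof -
  show "dd K a v < \<delta> \<Longrightarrow> \<not> dd K (a + \<delta>) v < m"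
    using dd_R4[OF assms(1), of \<delta> a v] assms dd_bounds[OF assms(1), of a v] by linarith
  show "(dd K a v < \<delta> + m) \<longleftrightarrow> (dd K a v < \<delta> \<or> dd K (a + \<delta>) v < m)"
  proof (cases "\<delta> \<le> dd K a v")
    case True thus ?thesis using dd_R3[OF assms(1,2) True] by linarith
  next
    case False thus ?thesis using dd_R4[OF assms(1), of \<delta> a v] assms dd_bounds[OF assms(1), of a v] by linarith
  qed
qed

lemma setA2:
  assumes "K > 0" "0 \<le> \<delta>" "0 \<le> m" "\<delta> + m < K"
  shows "(dd K a v \<le> \<delta> + m) \<longleftrightarrow> (dd K a v < \<delta> \<or> dd K (a + \<delta>) v \<le> m)"
    "dd K a v < \<delta> \<Longrightarrow> \<not> dd K (a + \<delta>) v \<le> m"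
proof -
  show "dd K a v < \<delta> \<Longrightarrow> \<not> dd K (a + \<delta>) v \<le> m"
    using dd_R4[OF assms(1), of \<delta> a v] assms dd_bounds[OF assms(1), of a v] by linarith
  show "(dd K a v \<le> \<delta> + m) \<longleftrightarrow> (dd K a v < \<delta> \<or> dd K (a + \<delta>) v \<le> m)"
  proof (cases "\<delta> \<le> dd K a v")
    case True thus ?thesis using dd_R3[OF assms(1,2) True] by linarith
  next
    case False thus ?thesis using dd_R4[OF assms(1), of \<delta> a v] assms dd_bounds[OF assms(1), of a v] by linarith
  qed
qed

lemma cardA1:
  assumes "K > 0" "0 \<le> \<delta>" "0 \<le> m" "\<delta> + m \<le> K" "finite P"
  shows "card {p\<in>P. dd K a (val p) < \<delta> + m} = card {p\<in>P. dd K a (val p) < \<delta>} + card {p\<in>P. dd K (a + \<delta>) (val p) < m}"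
proof -
  have "{p\<in>P. dd K a (val p) < \<delta> + m} = {p\<in>P. dd K a (val p) < \<delta>} \<union> {p\<in>P. dd K (a + \<delta>) (val p) < m}"
    using setA1(1)[OF assms(1-4)] by blast
  moreover have "{p\<in>P. dd K a (val p) < \<delta>} \<inter> {p\<in>P. dd K (a + \<delta>) (val p) < m} = {}"
    using setA1(2)[OF assms(1-4)] by blast
  ultimately show ?thesis using assms(5) by (simp add: card_Un_disjoint)
qed

lemma cardA2:
  assumes "K > 0" "0 \<le> \<delta>" "0 \<le> m" "\<delta> + m < K" "finite P"
  shows "card {p\<in>P. dd K a (val p) \<le> \<delta> + m} = card {p\<in>P. dd K a (val p) < \<delta>} + card {p\<in>P. dd K (a + \<delta>) (val p) \<le> m}"
proof -
  have "{p\<in>P. dd K a (val p) \<le> \<delta> + m} = {p\<in>P. dd K a (val p) < \<delta>} \<union> {p\<in>P. dd K (a + \<delta>) (val p) \<le> m}"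
    using setA2(1)[OF assms(1-4)] by blast
  moreover have "{p\<in>P. dd K a (val p) < \<delta>} \<inter> {p\<in>P. dd K (a + \<delta>) (val p) \<le> m} = {}"
    using setA2(2)[OF assms(1-4)] by blast
  ultimately show ?thesis using assms(5) by (simp add: card_Un_disjoint)
qed

lemma cardA3: assumes "K > 0" shows "{p\<in>P. dd K a (val p) < K} = P"
  using dd_bounds[OF assms] by blast

lemma J_mono: assumes "\<forall>t. J t < (J (Suc t) :: int)" "t \<le> r" shows "J t \<le> J r"
  using lift_Suc_mono_le[of J] assms by (simp add: less_imp_le)

lemma J_smono: assumes "\<forall>t. J t < (J (Suc t) :: int)" "t < r" shows "J t < J r"
  using lift_Suc_mono_less[of J] assms by simp

lemma sum_cards:
  fixes J :: "nat \<Rightarrow> int" and Pf :: "nat \<Rightarrow> nat set"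
  assumes "\<forall>t<l. int (card (Pf t)) = 2 * (J (Suc t) - J t) - (if fl t then 0 else 1)" "w \<le> l"
  shows "int (\<Sum>t<w. card (Pf t)) + int (card {t. t < w \<and> \<not> fl t}) = 2 * (J w - J 0)"
  using assms(2)
proof (induct w)
  case 0 thus ?case by simp
next
  case (Suc w)
  have e: "{t. t < Suc w \<and> \<not> fl t} = {t. t < w \<and> \<not> fl t} \<union> (if fl w then {} else {w})" by (auto simp: less_Suc_eq)
  have "int (card {t. t < Suc w \<and> \<not> fl t}) = int (card {t. t < w \<and> \<not> fl t}) + (if fl w then 0 else 1)"
    unfolding e by (auto simp: card_Un_disjoint)
  moreover have "int (card (Pf w)) = 2 * (J (Suc w) - J w) - (if fl w then 0 else 1)" using assms(1) Suc.prems by auto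
  ultimately show ?case using Suc by simp
qed

lemma core_back:
  fixes J :: "nat \<Rightarrow> int" and Pf :: "nat \<Rightarrow> nat set" and K :: real and val :: "nat \<Rightarrow> real"
  assumes K: "K = real k" "k > 0" and mono: "\<forall>t. J t < J (Suc t)" and Jl: "J l = J 0 + int k"
    and uniq: "\<forall>t<l. \<forall>r<l. \<not> fl t \<longrightarrow> \<not> fl r \<longrightarrow> t = r"
    and disj: "\<forall>t<l. \<forall>r<l. t \<noteq> r \<longrightarrow> Pf t \<inter> Pf r = {}"
    and sub: "\<forall>t<l. Pf t \<subseteq> P" and fin: "finite P"
    and bc_card: "\<forall>t<l. int (card (Pf t)) = 2 * (J (Suc t) - J t) - (if fl t then 0 else 1)"
    and bc_le: "\<forall>t<l. \<forall>p\<in>Pf t. dd K (of_int (J t)) (val p) \<le> of_int (J (Suc t) - J t)"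
    and bc_ch: "\<forall>t<l. \<forall>m::nat. int m < J (Suc t) - J t \<longrightarrow>
        2 * m + (if fl t then 1 else 0) \<le> card {p\<in>Pf t. dd K (of_int (J t)) (val p) \<le> real m}"
    and m: "m < k"
  shows "2 * m \<le> card {p\<in>P. dd K (of_int (J 0)) (val p) \<le> real m}"
proof -
  have Kp: "K > 0" using K by simp
  define W where "W = {w. w \<le> l \<and> J w - J 0 \<le> int m}"
  have finW: "finite W" unfolding W_def by simp
  have "0 \<in> W" unfolding W_def by simp
  define w where "w = Max W"
  have wW: "w \<in> W" unfolding w_def using finW \<open>0 \<in> W\<close> by (intro Max_in) auto
  have wl: "w < l"
  proof -
    have "w \<le> l" using wW unfolding W_def by simp
    moreover have "w \<noteq> l" using wW Jl m unfolding W_def by auto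
    ultimately show ?thesis by simp
  qed
  have Jw: "J w - J 0 \<le> int m" using wW unfolding W_def by simp
  have Jw1: "int m < J (Suc w) - J 0"
  proof (rule ccontr)
    assume "\<not> int m < J (Suc w) - J 0"
    hence "Suc w \<in> W" using wl unfolding W_def by simp
    hence "Suc w \<le> w" unfolding w_def using finW by (intro Max_ge) auto
    thus False by simp
  qed
  define m' where "m' = nat (int m - (J w - J 0))"
  have m'e: "int m' = int m - (J w - J 0)" unfolding m'_def using Jw by simp
  have m'l: "int m' < J (Suc w) - J w" using m'e Jw1 by simp
  define S1 where "S1 = (\<Union>t<w. Pf t)"
  define S2 where "S2 = {p\<in>Pf w. dd K (of_int (J w)) (val p) \<le> real m'}"
  have finPf: "finite (Pf t)" if "t < l" for t using sub fin that finite_subset by blast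
  have J0le: "J 0 \<le> J t" for t using J_mono[OF mono] by simp
  have R5: "dd K (of_int (J 0)) v \<le> dd K (of_int (J t)) v + (of_int (J t) - of_int (J 0))" for t v
    using dd_R5[OF Kp, of "of_int (J t) - of_int (J 0)" "of_int (J 0)" v] J0le[of t] by simp
  have "S1 \<union> S2 \<subseteq> {p\<in>P. dd K (of_int (J 0)) (val p) \<le> real m}"
  proof
    fix p assume "p \<in> S1 \<union> S2"
    thus "p \<in> {p\<in>P. dd K (of_int (J 0)) (val p) \<le> real m}"
    proof
      assume "p \<in> S1"
      then obtain t where t: "t < w" "p \<in> Pf t" unfolding S1_def by auto
      have "dd K (of_int (J t)) (val p) \<le> of_int (J (Suc t) - J t)" using bc_le t wl by auto
      moreover have "J (Suc t) \<le> J w" using J_mono[OF mono, of "Suc t" w] t by simp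
      moreover have "dd K (of_int (J 0)) (val p) \<le> dd K (of_int (J t)) (val p) + (of_int (J t) - of_int (J 0))"
        by (rule R5)
      ultimately have "dd K (of_int (J 0)) (val p) \<le> of_int (J w - J 0)" by (simp add: of_int_le_iff[symmetric])
      also have "\<dots> \<le> real m" using Jw by (metis of_int_le_iff of_int_of_nat_eq)
      finally have "dd K (of_int (J 0)) (val p) \<le> real m" .
      moreover have "t < l" using t wl by simp
      ultimately show ?thesis using sub t(2) by blast
    next
      assume "p \<in> S2"
      hence "p \<in> Pf w" "dd K (of_int (J w)) (val p) \<le> real m'" unfolding S2_def by auto
      moreover have "real m' = real m - (of_int (J w) - of_int (J 0))" using m'e by (metis of_int_diff of_int_of_nat_eq)
      moreover have "dd K (of_int (J 0)) (val p) \<le> dd K (of_int (J w)) (val p) + (of_int (J w) - of_int (J 0))"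
        by (rule R5)
      ultimately have "dd K (of_int (J 0)) (val p) \<le> real m" by simp
      thus ?thesis using sub \<open>p \<in> Pf w\<close> wl by auto
    qed
  qed
  hence c1: "card (S1 \<union> S2) \<le> card {p\<in>P. dd K (of_int (J 0)) (val p) \<le> real m}" using fin by (intro card_mono) auto
  have c2: "card (S1 \<union> S2) = card S1 + card S2"
  proof -
    have "S1 \<inter> S2 = {}"
    proof -
      have "Pf t \<inter> Pf w = {}" if "t < w" for t using disj that wl by auto
      thus ?thesis unfolding S1_def S2_def by blast
    qed
    moreover have "finite S1" unfolding S1_def using finPf wl by auto
    moreover have "finite S2" unfolding S2_def using finPf wl by auto
    ultimately show ?thesis by (simp add: card_Un_disjoint)
  qed
  have c3: "card S1 = (\<Sum>t<w. card (Pf t))" unfolding S1_def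
    using finPf wl disj by (intro card_UN_disjoint) auto
  have c4: "int (\<Sum>t<w. card (Pf t)) + int (card {t. t < w \<and> \<not> fl t}) = 2 * (J w - J 0)"
    using sum_cards[OF bc_card] wl by simp
  have c5: "2 * m' + (if fl w then 1 else 0) \<le> card S2" unfolding S2_def using bc_ch[rule_format, OF wl m'l] .
  have c6: "int (card {t. t < w \<and> \<not> fl t}) \<le> (if fl w then 1 else 0)"
  proof (cases "\<exists>t0<w. \<not> fl t0")
    case True
    then obtain t0 where t0: "t0 < w" "\<not> fl t0" by blast
    have "{t. t < w \<and> \<not> fl t} \<subseteq> {t0}" using uniq t0 wl by auto
    hence "card {t. t < w \<and> \<not> fl t} \<le> card {t0}" by (intro card_mono) auto
    hence "card {t. t < w \<and> \<not> fl t} \<le> 1" by simp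
    moreover have "fl w" using uniq t0 wl by (metis less_irrefl order.strict_trans)
    ultimately show ?thesis by simp
  next
    case False
    hence e: "{t. t < w \<and> \<not> fl t} = {}" by auto
    show ?thesis unfolding e by simp
  qed
  define A where "A = (\<Sum>t<w. card (Pf t))"
  define c where "c = card {t. t < w \<and> \<not> fl t}"
  define C where "C = card {p\<in>P. dd K (of_int (J 0)) (val p) \<le> real m}"
  define B where "B = card S2"
  have d1: "int A + int c = 2 * (J w - J 0)" using c4 unfolding A_def c_def .
  have d2: "int A + int B \<le> int C" using c1 c2 c3 unfolding A_def B_def C_def by linarith
  have d3: "2 * int m' + (if fl w then 1 else 0) \<le> int B" using c5 unfolding B_def by (cases "fl w") auto
  have d4: "int c \<le> (if fl w then 1 else 0)" using c6 unfolding c_def .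
  have "2 * int m \<le> int C" using d1 d2 d3 d4 m'e by (cases "fl w") auto
  thus ?thesis unfolding C_def by simp
qed

lemma core_total:
  fixes J :: "nat \<Rightarrow> int" and Pf :: "nat \<Rightarrow> nat set"
  assumes Jl: "J l = J 0 + int k" and s: "s < l" and fl: "\<forall>t<l. fl t \<longleftrightarrow> t \<noteq> s"
    and disj: "\<forall>t<l. \<forall>r<l. t \<noteq> r \<longrightarrow> Pf t \<inter> Pf r = {}"
    and cov: "(\<Union>t<l. Pf t) = P" and fin: "finite P"
    and bc_card: "\<forall>t<l. int (card (Pf t)) = 2 * (J (Suc t) - J t) - (if fl t then 0 else 1)"
  shows "int (card P) = 2 * int k - 1"
proof -
  have finPf: "finite (Pf t)" if "t < l" for t
  proof -
    have "Pf t \<subseteq> (\<Union>t<l. Pf t)" using that by (intro UN_upper) simp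
    thus ?thesis using cov fin finite_subset by metis
  qed
  have "card (\<Union>t<l. Pf t) = (\<Sum>t<l. card (Pf t))"
  proof (rule card_UN_disjoint)
    show "finite {..<l}" by simp
    show "\<forall>i\<in>{..<l}. finite (Pf i)" using finPf by simp
    show "\<forall>i\<in>{..<l}. \<forall>j\<in>{..<l}. i \<noteq> j \<longrightarrow> Pf i \<inter> Pf j = {}" using disj by simp
  qed
  hence "card P = (\<Sum>t<l. card (Pf t))" using cov by simp
  moreover have "{t. t < l \<and> \<not> fl t} = {s}"
  proof
    show "{t. t < l \<and> \<not> fl t} \<subseteq> {s}" using fl by blast
    show "{s} \<subseteq> {t. t < l \<and> \<not> fl t}" using fl s by blast
  qed
  ultimately show ?thesis using sum_cards[OF bc_card, of l] Jl by simp
qed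



lemma core_fwd:
  fixes J :: "nat \<Rightarrow> int" and K :: real and val :: "nat \<Rightarrow> real" and P :: "nat set"
  assumes K: "K = real k" "k > 0" and mono: "\<forall>t. J t < J (Suc t)" and Jl: "J l = J 0 + int k"
    and l: "l > 0" and fin: "finite P" and cardP: "card P = 2 * k - 1"
    and hyp: "\<forall>s<l. \<forall>m::nat. m < k \<longrightarrow> 2 * m \<le> card {p\<in>P. dd K (of_int (J s)) (val p) \<le> real m}"
  shows "\<exists>s<l. \<exists>Pf. (\<forall>t<l. \<forall>r<l. t \<noteq> r \<longrightarrow> Pf t \<inter> Pf r = {}) \<and> (\<Union>t<l. Pf t) = P \<and>
    (\<forall>t<l. int (card (Pf t)) = 2 * (J (Suc t) - J t) - (if t \<noteq> s then 0 else 1) \<and>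
      (\<forall>p\<in>Pf t. dd K (of_int (J t)) (val p) \<le> of_int (J (Suc t) - J t)) \<and>
      (\<forall>m::nat. int m < J (Suc t) - J t \<longrightarrow>
         2 * m + (if t \<noteq> s then 1 else 0) \<le> card {p\<in>Pf t. dd K (of_int (J t)) (val p) \<le> real m}))"
proof -
  have Kp: "K > 0" using K by simp
  define d where "d t p = dd K (of_int (J t)) (val p)" for t p
  define L where "L t = J (Suc t) - J t" for t
  have Lpos: "L t > 0" for t using mono unfolding L_def by (simp add: algebra_simps)
  have dpos: "0 \<le> d t p" for t p unfolding d_def using dd_bounds[OF Kp] by simp
  have dK: "d t p < K" for t p unfolding d_def using dd_bounds[OF Kp] by simp
  have Jmono: "t \<le> r \<Longrightarrow> J t \<le> J r" for t r using J_mono[OF mono] by simp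
  have JlK: "of_int (J l) = of_int (J 0) + K" using Jl K by simp
  have dl: "d l p = d 0 p" for p unfolding d_def JlK using dd_period1[OF Kp] by simp
  define h where "h t = card {p\<in>P. d 0 p < of_int (J t - J 0)}" for t
  define \<alpha> where "\<alpha> t = int (h t) - 2 * (J t - J 0)" for t
  have h0: "h 0 = 0"
  proof -
    have "\<forall>p. \<not> d 0 p < 0" using dpos by (simp add: not_less)
    thus ?thesis unfolding h_def by simp
  qed
  have hl: "h l = 2 * k - 1"
  proof -
    have "{p\<in>P. d 0 p < of_int (J l - J 0)} = P" using dK Jl K by simp
    thus ?thesis unfolding h_def using cardP by simp
  qed
  have \<alpha>0: "\<alpha> 0 = 0" unfolding \<alpha>_def using h0 by simp
  have \<alpha>l: "\<alpha> l = -1" unfolding \<alpha>_def using hl Jl K(2) by simp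
  have addH: "int (h r) = int (h t) + int (card {p\<in>P. d t p < of_int (J r - J t)})" if "t \<le> r" "r \<le> l" for t r
  proof -
    have "card {p\<in>P. dd K (of_int (J 0)) (val p) < of_int (J t - J 0) + of_int (J r - J t)} =
      card {p\<in>P. dd K (of_int (J 0)) (val p) < of_int (J t - J 0)} +
      card {p\<in>P. dd K (of_int (J 0) + of_int (J t - J 0)) (val p) < of_int (J r - J t)}"
      using Jmono[of 0 t] Jmono[OF that(1)] Jmono[OF that(2)] Jl K
      by (intro cardA1[OF Kp _ _ _ fin]) auto
    thus ?thesis unfolding h_def d_def by simp
  qed
  define M where "M = Max (\<alpha> ` {..<l})"
  have Mge: "\<alpha> t \<le> M" if "t < l" for t unfolding M_def using that by (intro Max_ge) auto
  have "M \<in> \<alpha> ` {..<l}" unfolding M_def using l by (intro Max_in) auto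
  define S where "S = {t. t < l \<and> \<alpha> t = M}"
  have "S \<noteq> {}" using \<open>M \<in> \<alpha> ` {..<l}\<close> unfolding S_def by auto
  define s where "s = Max S"
  have finS: "finite S" unfolding S_def by simp
  have sS: "s \<in> S" unfolding s_def using finS \<open>S \<noteq> {}\<close> by (rule Max_in)
  have sl: "s < l" and \<alpha>s: "\<alpha> s = M" using sS unfolding S_def by auto
  have after: "\<alpha> t < M" if "s < t" "t < l" for t
  proof (rule ccontr)
    assume "\<not> \<alpha> t < M"
    hence "t \<in> S" using Mge[OF that(2)] that unfolding S_def by simp
    hence "t \<le> s" unfolding s_def using finS by simp
    thus False using that by simp
  qed
  have M0: "M \<ge> 0" using Mge[OF l] \<alpha>0 by simp
  define E where "E t = M - \<alpha> t - (if s < t then 1 else 0)" for t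
  have E0: "E 0 = M" unfolding E_def using \<alpha>0 by simp
  have El: "E l = M" unfolding E_def using \<alpha>l sl by simp
  have Epos: "E t \<ge> 0" if "t < l" for t
    using Mge[OF that] after[OF _ that] unfolding E_def by (cases "s < t") auto
  have key: "int (card {p\<in>P. d t p \<le> real m}) \<ge> 2 * int m + (if t \<noteq> s then 1 else 0) + E t"
    if t: "t < l" and m: "int m < L t" for t m
  proof (cases "s \<le> t")
    case True
    have J1: "J (Suc t) \<le> J l" using Jmono[of "Suc t" l] t by simp
    have Js0: "J 0 \<le> J s" using Jmono[of 0 s] by simp
    have Jst: "J s \<le> J t" using Jmono[of s t] True by simp
    define m2 where "m2 = nat (J t - J s + int m)"
    have m2e: "int m2 = J t - J s + int m" unfolding m2_def using Jst by simp
    have m2k: "m2 < k" using m2e m J1 Jl Js0 unfolding L_def by linarith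
    have "card {p\<in>P. dd K (of_int (J s)) (val p) \<le> of_int (J t - J s) + real m} =
      card {p\<in>P. dd K (of_int (J s)) (val p) < of_int (J t - J s)} +
      card {p\<in>P. dd K (of_int (J s) + of_int (J t - J s)) (val p) \<le> real m}"
    proof (rule cardA2[OF Kp _ _ _ fin])
      show "0 \<le> (of_int (J t - J s) :: real)" using Jst by simp
      show "0 \<le> real m" by simp
      have "J t - J s + int m < int k" using m2e m2k by linarith
      hence "real_of_int (J t - J s + int m) < real k" by linarith
      thus "of_int (J t - J s) + real m < K" using K by simp
    qed
    moreover have rm2: "real m2 = of_int (J t - J s) + real m"
    proof -
      have "real_of_int (int m2) = real_of_int (J t - J s + int m)" using m2e by simp
      thus ?thesis by simp
    qed
    ultimately have e1: "card {p\<in>P. d s p \<le> real m2} = card {p\<in>P. d s p < of_int (J t - J s)} + card {p\<in>P. d t p \<le> real m}"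
      unfolding d_def by simp
    have e2: "int (h t) = int (h s) + int (card {p\<in>P. d s p < of_int (J t - J s)})"
      using addH[OF True] t by simp
    have "2 * m2 \<le> card {p\<in>P. d s p \<le> real m2}" using hyp[rule_format, OF sl m2k] unfolding d_def .
    hence "2 * int m2 \<le> int (card {p\<in>P. d s p < of_int (J t - J s)}) + int (card {p\<in>P. d t p \<le> real m})"
      using e1 by linarith
    thus ?thesis using e2 m2e \<alpha>s True unfolding E_def \<alpha>_def by (cases "t = s") auto
  next
    case False
    hence ts: "t < s" by simp
    have J1: "J (Suc t) \<le> J s" using Jmono[of "Suc t" s] ts by simp
    have Js0: "J 0 \<le> J t" using Jmono[of 0 t] by simp
    have Jsl: "J s \<le> J l" using Jmono[of s l] sl by simp
    define m2 where "m2 = nat (J t + int k - J s + int m)"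
    have m2e: "int m2 = J t + int k - J s + int m" unfolding m2_def using Jsl Jl Js0 by simp
    have m2k: "m2 < k" using m2e m J1 unfolding L_def by linarith
    have "card {p\<in>P. dd K (of_int (J s)) (val p) \<le> of_int (J t + int k - J s) + real m} =
      card {p\<in>P. dd K (of_int (J s)) (val p) < of_int (J t + int k - J s)} +
      card {p\<in>P. dd K (of_int (J s) + of_int (J t + int k - J s)) (val p) \<le> real m}"
    proof (rule cardA2[OF Kp _ _ _ fin])
      show "0 \<le> (of_int (J t + int k - J s) :: real)" using Jsl Jl Js0 by simp
      show "0 \<le> real m" by simp
      have "J t + int k - J s + int m < int k" using m2e m2k by linarith
      hence "real_of_int (J t + int k - J s + int m) < real k" by linarith
      thus "of_int (J t + int k - J s) + real m < K" using K by simp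
    qed
    moreover have "dd K (of_int (J s) + of_int (J t + int k - J s)) (val v) = d t' v" if "t' = t" for v t'
    proof -
      have "of_int (J s) + of_int (J t + int k - J s) = of_int (J t) + K" using K by simp
      thus ?thesis using that dd_period1[OF Kp] unfolding d_def by simp
    qed
    moreover have rm2: "real m2 = of_int (J t + int k - J s) + real m"
    proof -
      have "real_of_int (int m2) = real_of_int (J t + int k - J s + int m)" using m2e by simp
      thus ?thesis by simp
    qed
    ultimately have e1: "card {p\<in>P. d s p \<le> real m2} = card {p\<in>P. d s p < of_int (J t + int k - J s)} + card {p\<in>P. d t p \<le> real m}"
      unfolding d_def by simp
    have e2: "card {p\<in>P. d s p < of_int (J t + int k - J s)} = card {p\<in>P. d s p < of_int (J l - J s)} + h t"
    proof -
      have "card {p\<in>P. dd K (of_int (J s)) (val p) < of_int (J l - J s) + of_int (J t - J 0)} =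
        card {p\<in>P. dd K (of_int (J s)) (val p) < of_int (J l - J s)} +
        card {p\<in>P. dd K (of_int (J s) + of_int (J l - J s)) (val p) < of_int (J t - J 0)}"
        using Jsl Js0 J1 Jmono[of t "Suc t"] Jl K by (intro cardA1[OF Kp _ _ _ fin]) auto
      moreover have "of_int (J s) + of_int (J l - J s) = (of_int (J 0) + K :: real)" using Jl K by simp
      moreover have "of_int (J l - J s) + of_int (J t - J 0) = (of_int (J t + int k - J s) :: real)" using Jl by simp
      moreover have ee: "real k + (real_of_int (J t) - real_of_int (J s)) = real_of_int (J t) + real k - real_of_int (J s)" by simp
      ultimately show ?thesis unfolding d_def h_def using dd_period1[OF Kp] by (simp only: ee)
    qed
    have e3: "int (h l) = int (h s) + int (card {p\<in>P. d s p < of_int (J l - J s)})"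
      using addH[of s l] sl by simp
    have "2 * m2 \<le> card {p\<in>P. d s p \<le> real m2}" using hyp[rule_format, OF sl m2k] unfolding d_def .
    hence "2 * int m2 \<le> int (card {p\<in>P. d s p < of_int (J l - J s)}) + int (h t) + int (card {p\<in>P. d t p \<le> real m})"
      using e1 e2 by linarith
    thus ?thesis using e3 hl m2e \<alpha>s ts K(2) Jl unfolding E_def \<alpha>_def by auto
  qed
  define Z where "Z t = {p\<in>P. d t p = 0}" for t
  define Op where "Op t = {p\<in>P. 0 < d t p \<and> d t p < of_int (L t)}" for t
  define W where "W t = {p\<in>P. d t p < of_int (L t)}" for t
  have finZ: "finite (Z t)" for t unfolding Z_def using fin by simp
  have finO: "finite (Op t)" for t unfolding Op_def using fin by simp
  have WZO: "W t = Z t \<union> Op t" for t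
    unfolding W_def Z_def Op_def using dpos[of t] Lpos[of t] by (auto simp: order_le_less)
  have ZO: "Z t \<inter> Op t = {}" for t unfolding Z_def Op_def by auto
  have cardWZO: "card (W t) = card (Z t) + card (Op t)" for t
    unfolding WZO using ZO finZ finO by (simp add: card_Un_disjoint)
  have cardW: "int (card (W t)) = int (h (Suc t)) - int (h t)" if "t < l" for t
    using addH[of t "Suc t"] that unfolding W_def L_def by simp
  have Nsplit: "card {p\<in>P. d t p \<le> real m} = card (Z t) + card {p\<in>Op t. d t p \<le> real m}"
    if "int m < L t" for t m
  proof -
    have "real m < of_int (L t)" using that by (metis of_int_less_iff of_int_of_nat_eq)
    hence "{p\<in>P. d t p \<le> real m} = Z t \<union> {p\<in>Op t. d t p \<le> real m}"
      unfolding Z_def Op_def using dpos[of t] by (auto simp: order_le_less)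
    moreover have "Z t \<inter> {p\<in>Op t. d t p \<le> real m} = {}" using ZO by blast
    ultimately show ?thesis using finZ finO by (simp add: card_Un_disjoint)
  qed
  have EleZ: "E t \<le> int (card (Z t))" if "t < l" for t
  proof -
    have "int 0 < L t" using Lpos by simp
    hence c: "card {p\<in>P. d t p \<le> real 0} = card (Z t) + card {p\<in>Op t. d t p \<le> real 0}" by (rule Nsplit)
    have e: "{p\<in>Op t. d t p \<le> real 0} = {}" unfolding Op_def by auto
    have "card {p\<in>P. d t p \<le> real 0} = card (Z t)" using c unfolding e by simp
    thus ?thesis using key[OF that \<open>int 0 < L t\<close>] by (simp split: if_splits)
  qed
  have Wloc: "of_int (J t - J 0) \<le> d 0 p \<and> d 0 p < of_int (J (Suc t) - J 0)" if "p \<in> W t" "t < l" for p t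
  proof -
    have a: "J 0 \<le> J t" "J (Suc t) \<le> J l" using Jmono that(2) by auto
    have s1: "(dd K (of_int (J 0)) (val p) < of_int (J t - J 0) + of_int (L t)) \<longleftrightarrow>
      (dd K (of_int (J 0)) (val p) < of_int (J t - J 0) \<or> dd K (of_int (J 0) + of_int (J t - J 0)) (val p) < of_int (L t))"
      using a Jl K Lpos[of t] unfolding L_def by (intro setA1(1)[OF Kp]) auto
    have s2: "dd K (of_int (J 0)) (val p) < of_int (J t - J 0) \<Longrightarrow> \<not> dd K (of_int (J 0) + of_int (J t - J 0)) (val p) < of_int (L t)"
      using a Jl K Lpos[of t] unfolding L_def by (intro setA1(2)[OF Kp]) auto
    have dl: "d t p < of_int (L t)" using that(1) unfolding W_def by simp
    have n1: "\<not> d 0 p < of_int (J t - J 0)" using s2 dl unfolding d_def L_def by auto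
    have n2: "d 0 p < of_int (J (Suc t) - J 0)"
    proof -
      have "of_int (J t - J 0) + of_int (L t) = (of_int (J (Suc t) - J 0) :: real)" unfolding L_def by simp
      thus ?thesis using s1 dl unfolding d_def by auto
    qed
    show ?thesis using n1 n2 by simp
  qed
  have Wdisj: "W t \<inter> W r = {}" if "t < l" "r < l" "t \<noteq> r" for t r
  proof -
    have "W t \<inter> W r = {}" if "t < r" "r < l" for t r
    proof -
      have "J (Suc t) \<le> J r" using Jmono that by simp
      thus ?thesis using Wloc[of _ t] Wloc[of _ r] that by fastforce
    qed
    thus ?thesis using that by (metis inf_commute linorder_neqE_nat)
  qed
  have Wcov: "\<exists>t<l. p \<in> W t" if p: "p \<in> P" for p
  proof -
    define T where "T = {t. t \<le> l \<and> of_int (J t - J 0) \<le> d 0 p}"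
    have "0 \<in> T" unfolding T_def using dpos by simp
    have finT: "finite T" unfolding T_def by simp
    define t where "t = Max T"
    have tT: "t \<in> T" unfolding t_def using finT \<open>0 \<in> T\<close> by (intro Max_in) auto
    have tl: "t < l"
    proof -
      have "t \<noteq> l" using tT dK[of 0 p] Jl K unfolding T_def by auto
      thus ?thesis using tT unfolding T_def by simp
    qed
    have lo: "of_int (J t - J 0) \<le> d 0 p" using tT unfolding T_def by simp
    have hi: "d 0 p < of_int (J (Suc t) - J 0)"
    proof (rule ccontr)
      assume "\<not> d 0 p < of_int (J (Suc t) - J 0)"
      hence "Suc t \<in> T" using tl unfolding T_def by simp
      hence "Suc t \<le> t" unfolding t_def using finT by simp
      thus False by simp
    qed
    have a: "J 0 \<le> J t" "J (Suc t) \<le> J l" using Jmono tl by auto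
    have s1: "(dd K (of_int (J 0)) (val p) < of_int (J t - J 0) + of_int (L t)) \<longleftrightarrow>
      (dd K (of_int (J 0)) (val p) < of_int (J t - J 0) \<or> dd K (of_int (J 0) + of_int (J t - J 0)) (val p) < of_int (L t))"
      using a Jl K Lpos[of t] unfolding L_def by (intro setA1(1)[OF Kp]) auto
    have "d t p < of_int (L t)" using s1 lo hi unfolding d_def L_def by auto
    thus ?thesis using tl p unfolding W_def by auto
  qed
  have ZW: "Z t \<subseteq> W t" for t unfolding WZO by simp
  obtain Lo where Lo: "\<forall>t. Lo t \<subseteq> Z t \<and> card (Lo t) = card (Z t) - nat (E t)"
  proof -
    have "\<forall>t. \<exists>X. X \<subseteq> Z t \<and> card X = card (Z t) - nat (E t)"
    proof
      fix t
      obtain X where "X \<subseteq> Z t" "card X = card (Z t) - nat (E t)"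
        using obtain_subset_with_card_n[of "card (Z t) - nat (E t)" "Z t"] by auto
      thus "\<exists>X. X \<subseteq> Z t \<and> card X = card (Z t) - nat (E t)" by blast
    qed
    thus ?thesis using that by metis
  qed
  define nx where "nx t = Suc t mod l" for t
  have nxl: "nx t < l" for t unfolding nx_def using l by simp
  have nxe: "nx t = (if Suc t < l then Suc t else 0)" if "t < l" for t
    unfolding nx_def using that by (auto simp: not_less_eq less_Suc_eq)
  have dnx: "d (nx t) p = d (Suc t) p" if "t < l" for t p
    using nxe[OF that] dl[of p] that by (auto simp: not_less_eq less_Suc_eq)
  have Enx: "E (nx t) = E (Suc t)" if "t < l" for t
    using nxe[OF that] E0 El that by (auto simp: not_less_eq less_Suc_eq)
  have nxinj: "t = r" if "t < l" "r < l" "nx t = nx r" for t r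
    using that nxe[OF that(1)] nxe[OF that(2)] by (auto split: if_splits)
  define Hi where "Hi t = Z (nx t) - Lo (nx t)" for t
  define Pf where "Pf t = Lo t \<union> Op t \<union> Hi t" for t
  have LoW: "Lo t \<subseteq> W t" for t using Lo ZW by blast
  have OW: "Op t \<subseteq> W t" for t unfolding WZO by simp
  have HiW: "Hi t \<subseteq> W (nx t)" for t unfolding Hi_def using ZW by blast
  have disjPf: "Pf t \<inter> Pf r = {}" if tr: "t < l" "r < l" "t \<noteq> r" for t r
  proof -
    have A: "(Lo t \<union> Op t) \<inter> Hi r = {}" if "t < l" "r < l" for t r
    proof (cases "t = nx r")
      case True
      hence "Hi r = Z t - Lo t" unfolding Hi_def by simp
      thus ?thesis using ZO by blast
    next
      case False
      thus ?thesis using Wdisj[OF that(1) nxl[of r] False] LoW OW HiW by blast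
    qed
    have B: "(Lo t \<union> Op t) \<inter> (Lo r \<union> Op r) = {}" using Wdisj[OF tr] LoW OW by blast
    have C: "Hi t \<inter> Hi r = {}"
    proof -
      have "nx t \<noteq> nx r" using nxinj tr by blast
      thus ?thesis using Wdisj[OF nxl nxl] HiW by blast
    qed
    show ?thesis unfolding Pf_def using A[OF tr(1,2)] A[OF tr(2,1)] B C by blast
  qed
  have covPf: "(\<Union>t<l. Pf t) = P"
  proof
    show "(\<Union>t<l. Pf t) \<subseteq> P" unfolding Pf_def Hi_def Op_def using Lo unfolding Z_def by blast
    show "P \<subseteq> (\<Union>t<l. Pf t)"
    proof
      fix p assume p: "p \<in> P"
      obtain t where t: "t < l" "p \<in> W t" using Wcov[OF p] by blast
      show "p \<in> (\<Union>t<l. Pf t)"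
      proof (cases "p \<in> Lo t \<union> Op t")
        case True thus ?thesis using t(1) unfolding Pf_def by blast
      next
        case False
        hence pz: "p \<in> Z t - Lo t" using t(2) unfolding WZO by blast
        define r where "r = (if t = 0 then l - 1 else t - 1)"
        have rl: "r < l" unfolding r_def using t(1) l by auto
        have "nx r = t" unfolding nx_def r_def using t(1) l by auto
        hence "p \<in> Hi r" unfolding Hi_def using pz by simp
        thus ?thesis using rl unfolding Pf_def by blast
      qed
    qed
  qed
  have cardLo: "int (card (Lo t)) = int (card (Z t)) - E t" if "t < l" for t
    using Lo EleZ[OF that] Epos[OF that] by simp
  have cardHi: "int (card (Hi t)) = E (Suc t)" if "t < l" for t
  proof -
    have ss: "Lo (nx t) \<subseteq> Z (nx t)" using Lo by blast
    have "card (Hi t) = card (Z (nx t)) - card (Lo (nx t))" unfolding Hi_def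
      using card_Diff_subset[OF finite_subset[OF ss finZ] ss] .
    moreover have "card (Lo (nx t)) \<le> card (Z (nx t))" using card_mono[OF finZ ss] .
    ultimately show ?thesis using cardLo[OF nxl[of t]] Enx[OF that] by (simp add: of_nat_diff)
  qed
  have cardPf: "int (card (Pf t)) = 2 * (J (Suc t) - J t) - (if t \<noteq> s then 0 else 1)" if t: "t < l" for t
  proof -
    have d1: "Lo t \<inter> Op t = {}" using Lo ZO by blast
    have d2: "(Lo t \<union> Op t) \<inter> Hi t = {}"
    proof (cases "nx t = t")
      case True
      hence "Hi t = Z t - Lo t" unfolding Hi_def by simp
      thus ?thesis using ZO by blast
    next
      case False
      hence "W t \<inter> W (nx t) = {}" using Wdisj[OF t nxl[of t]] by metis
      thus ?thesis using LoW[of t] OW[of t] HiW[of t] by blast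
    qed
    have finLo: "finite (Lo t)" using Lo finZ finite_subset by blast
    have finHi: "finite (Hi t)" unfolding Hi_def using finZ by simp
    have "card (Pf t) = card (Lo t) + card (Op t) + card (Hi t)" unfolding Pf_def
      using d1 d2 finLo finO finHi by (simp add: card_Un_disjoint)
    hence "int (card (Pf t)) = int (card (Z t)) - E t + int (card (Op t)) + E (Suc t)"
      using cardLo[OF t] cardHi[OF t] by simp
    also have "\<dots> = int (h (Suc t)) - int (h t) - E t + E (Suc t)" using cardW[OF t] cardWZO[of t] by simp
    also have "\<dots> = 2 * (J (Suc t) - J t) - (if t \<noteq> s then 0 else 1)"
      unfolding E_def \<alpha>_def by auto
    finally show ?thesis .
  qed
  have boundPf: "\<forall>p\<in>Pf t. dd K (of_int (J t)) (val p) \<le> of_int (J (Suc t) - J t)" if t: "t < l" for t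
  proof
    fix p assume p: "p \<in> Pf t"
    have "d t p \<le> of_int (L t)"
    proof -
      consider "p \<in> Lo t" | "p \<in> Op t" | "p \<in> Hi t" using p unfolding Pf_def by blast
      thus ?thesis
      proof cases
        case 1 thus ?thesis using Lo Lpos[of t] unfolding Z_def by force
      next
        case 2 thus ?thesis unfolding Op_def by simp
      next
        case 3
        hence "d (nx t) p = 0" unfolding Hi_def Z_def by simp
        hence "d (Suc t) p = 0" using dnx[OF t] by simp
        moreover have "d t p \<le> d (Suc t) p + of_int (L t)"
          using dd_R5[OF Kp, of "of_int (L t)" "of_int (J t)" "val p"] Lpos[of t] unfolding d_def L_def by simp
        ultimately show ?thesis by simp
      qed
    qed
    thus "dd K (of_int (J t)) (val p) \<le> of_int (J (Suc t) - J t)" unfolding d_def L_def by simp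
  qed
  have chainPf: "2 * m + (if t \<noteq> s then 1 else 0) \<le> card {p\<in>Pf t. dd K (of_int (J t)) (val p) \<le> real m}"
    if t: "t < l" and m: "int m < J (Suc t) - J t" for t m
  proof -
    have mL: "int m < L t" using m unfolding L_def .
    have sub: "Lo t \<union> {p\<in>Op t. d t p \<le> real m} \<subseteq> {p\<in>Pf t. d t p \<le> real m}"
      unfolding Pf_def using Lo dpos unfolding Z_def by force
    have "card (Lo t \<union> {p\<in>Op t. d t p \<le> real m}) = card (Lo t) + card {p\<in>Op t. d t p \<le> real m}"
    proof -
      have "Lo t \<inter> {p\<in>Op t. d t p \<le> real m} = {}" using Lo ZO by blast
      moreover have "finite (Lo t)" using Lo finZ finite_subset by blast
      ultimately show ?thesis using finO by (simp add: card_Un_disjoint)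
    qed
    moreover have "card (Lo t \<union> {p\<in>Op t. d t p \<le> real m}) \<le> card {p\<in>Pf t. d t p \<le> real m}"
    proof (rule card_mono[OF _ sub])
      have "Pf t \<subseteq> P" unfolding Pf_def Hi_def Op_def using Lo unfolding Z_def by blast
      hence "{p\<in>Pf t. d t p \<le> real m} \<subseteq> P" by blast
      thus "finite {p\<in>Pf t. d t p \<le> real m}" using fin finite_subset by blast
    qed
    moreover have "int (card {p\<in>P. d t p \<le> real m}) \<ge> 2 * int m + (if t \<noteq> s then 1 else 0) + E t"
      by (rule key[OF t mL])
    ultimately have "int (2 * m + (if t \<noteq> s then 1 else 0)) \<le> int (card {p\<in>Pf t. d t p \<le> real m})"
      using Nsplit[OF mL] cardLo[OF t] by (simp split: if_splits)
    thus ?thesis unfolding d_def by simp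
  qed
  show ?thesis
    using sl disjPf covPf cardPf boundPf chainPf by (intro exI[of _ s] conjI impI exI[of _ Pf]) auto
qed



lemma Cblock_cb: "Cblock k I s t = cb (idx k I t) (idx k I (Suc t)) (t \<noteq> s)"
  unfolding Cblock_def cb_def Let_def by simp

lemma idx_facts:
  assumes k: "k \<ge> 1" and I: "I \<subseteq> {..<k}" "I \<noteq> {}"
    and l_def: "l = card I"
    and Jc_def: "Jc = (\<lambda>t. int (idx k I (t mod l)) + int k * int (t div l))"
  shows "l > 0" "\<And>t. t \<le> l \<Longrightarrow> Jc t = int (idx k I t)" "\<And>t. Jc t < Jc (Suc t)"
    "\<And>t q. Jc (t + q * l) = Jc t + int q * int k" "idx k I ` {..<l} = I"
    "\<And>t. t < l \<Longrightarrow> idx k I t < idx k I (Suc t)"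
proof -
  have finI: "finite I" using I(1) finite_subset by blast
  define xs where "xs = sorted_list_of_set I"
  have lxs: "length xs = l" unfolding xs_def l_def using finI by simp
  have sxs: "sorted_wrt (<) xs" unfolding xs_def by simp
  have setxs: "set xs = I" unfolding xs_def using finI by simp
  show lpos: "l > 0" unfolding l_def using finI I(2) by (simp add: card_gt_0_iff)
  have idxlt: "idx k I t = xs!t" if "t < l" for t unfolding idx_def Let_def using that lxs xs_def by simp
  have idxl: "idx k I l = xs!0 + k" unfolding idx_def Let_def using lxs xs_def by simp
  have xk: "xs!t < k" if "t < l" for t using nth_mem[of t xs] that lxs setxs I(1) by auto
  have xlt: "xs!t < xs!r" if "t < r" "r < l" for t r using sorted_wrt_nth_less[OF sxs that(1)] that lxs by simp
  show Jle: "Jc t = int (idx k I t)" if "t \<le> l" for t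
  proof (cases "t = l")
    case True thus ?thesis unfolding Jc_def using lpos idxl idxlt by simp
  next
    case False thus ?thesis unfolding Jc_def using that by simp
  qed
  show Jper: "Jc (t + q * l) = Jc t + int q * int k" for t q
  proof -
    have "(t + q * l) mod l = t mod l" by simp
    moreover have "(t + q * l) div l = t div l + q" using lpos by simp
    ultimately show ?thesis unfolding Jc_def by (simp add: algebra_simps)
  qed
  show "Jc t < Jc (Suc t)" for t
  proof -
    define r where "r = t mod l"
    define q where "q = t div l"
    have t: "t = r + q * l" unfolding r_def q_def by simp
    have rl: "r < l" unfolding r_def using lpos by simp
    have "Jc t = Jc r + int q * int k" using Jper t by metis
    moreover have "Jc (Suc t) = Jc (Suc r) + int q * int k" using Jper[of "Suc r" q] t by simp
    moreover have "Jc r < Jc (Suc r)"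
    proof (cases "Suc r < l")
      case True thus ?thesis using Jle[of r] Jle[of "Suc r"] idxlt xlt rl by simp
    next
      case False
      hence "Suc r = l" using rl by simp
      moreover have "xs!r < k" using xk rl by simp
      ultimately show ?thesis using Jle[of r] Jle[of "Suc r"] idxlt rl idxl by simp
    qed
    ultimately show ?thesis by simp
  qed
  show "idx k I ` {..<l} = I"
  proof -
    have "idx k I ` {..<l} = (\<lambda>t. xs!t) ` {..<l}" using idxlt by simp
    also have "\<dots> = set xs" using lxs by (auto simp: in_set_conv_nth)
    finally show ?thesis using setxs by simp
  qed
  show "idx k I t < idx k I (Suc t)" if "t < l" for t
  proof (cases "Suc t < l")
    case True thus ?thesis using idxlt xlt that by simp
  next
    case False
    hence "Suc t = l" using that by simp
    moreover have "xs!t < k" using xk that by simp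
    ultimately show ?thesis using idxlt that idxl by simp
  qed
qed



lemma map_add_upt': "map (\<lambda>j. j + i) [a..<b] = [a + i..<b + i]"
  by (induct b) auto

lemma B0_shift:
  "map (\<lambda>q. (fst q + real i, snd q + real i)) (concat (map (\<lambda>j. [(0, real j), (0, real j)]) [1..<k]) @ [(0, real k)])
   = cb i (i + k) False"
proof -
  have e: "[Suc i..<i + k] = map (\<lambda>j. j + i) [1..<k]" using map_add_upt'[of i 1 k] by (simp add: add.commute)
  show ?thesis unfolding cb_def e by (simp add: map_concat o_def add.commute)
qed

lemma length_B0: "k \<ge> 1 \<Longrightarrow> length (concat (map (\<lambda>j. [(0::real, real j), (0, real j)]) [1..<k]) @ [(0, real k)]) = 2 * k - 1"
proof -
  have "length (concat (map (\<lambda>j. [(0::real, real j), (0, real j)]) xs)) = 2 * length xs" for xs :: "nat list"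
    by (induct xs) auto
  thus "k \<ge> 1 \<Longrightarrow> ?thesis" by simp
qed

lemma Xi_mem:
  assumes k: "k \<ge> 1"
  shows "x \<in> Xi k i \<longleftrightarrow> length x = 2 * k - 1 \<and> inT (real k) x \<and>
    (\<forall>m<k. 2 * m \<le> card {p\<in>{..<length x}. dd (real k) (real i) (x!p) \<le> real m})"
proof -
  let ?B0 = "concat (map (\<lambda>j. [(0::real, real j), (0, real j)]) [1..<k]) @ [(0, real k)]"
  have kp: "real k > 0" using k by simp
  have fs: "\<forall>q\<in>set ?B0. fst q \<le> snd q" by auto
  have "x \<in> Xi k i \<longleftrightarrow> length x = length ?B0 \<and> inT (real k) x \<and>
     Mt (real k) (\<lambda>p. x!p) {..<length x} (cb i (i + k) False)"
    unfolding Xi_def X0_def tshift_symclos[OF kp fs] B0_shift ..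
  also have "\<dots> \<longleftrightarrow> length x = 2 * k - 1 \<and> inT (real k) x \<and>
    (\<forall>m<k. 2 * m \<le> card {p\<in>{..<length x}. dd (real k) (real i) (x!p) \<le> real m})"
  proof -
    have "i < i + k" using k by simp
    note cm = cb_match[OF this, of "{..<length x}" "real k" "\<lambda>p. x!p" False]
    have "\<forall>p\<in>{..<length x}. dd (real k) (real i) (x!p) \<le> real (i + k - i)"
      using dd_bounds(2)[OF kp] by (simp add: less_imp_le)
    thus ?thesis using cm length_B0[OF k] by auto
  qed
  finally show ?thesis .
qed



lemma modinj0:
  fixes t t' u l :: nat
  assumes "t < l" "t' < l" "(t + u) mod l = (t' + u) mod l" "t' \<le> t"
  shows "t = t'"
proof -
  have "l dvd (t + u) - (t' + u)" using mod_eq_dvd_iff_nat[of "t' + u" "t + u" l] assms by simp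
  hence "l dvd t - t'" by simp
  moreover have "t - t' < l" using assms by simp
  ultimately have "t - t' = 0" by (metis dvd_imp_le not_less zero_less_iff_neq_zero)
  thus "t = t'" using assms by simp
qed

lemma modinj:
  fixes t t' u l :: nat
  assumes "t < l" "t' < l" "(t + u) mod l = (t' + u) mod l"
  shows "t = t'"
  using modinj0[OF assms] modinj0[OF assms(2,1) assms(3)[symmetric]] by linarith

lemma part1:
  assumes k: "k \<ge> 1" and I: "I \<subseteq> {..<k}" "I \<noteq> {}"
  shows "(\<Inter>i\<in>I. Xi k i) = (\<Union>s<card I. symclos (CIs k I s))"
proof -
  define l where "l = card I"
  define Jc where "Jc = (\<lambda>t. int (idx k I (t mod l)) + int k * int (t div l))"
  note IF = idx_facts[OF k I l_def Jc_def]
  have lpos: "l > 0" by (rule IF(1))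
  have Jle: "t \<le> l \<Longrightarrow> Jc t = int (idx k I t)" for t by (rule IF(2))
  have Jmono: "\<forall>t. Jc t < Jc (Suc t)" using IF(3) by blast
  have Jper: "Jc (t + q * l) = Jc t + int q * int k" for t q by (rule IF(4))
  have idxI: "idx k I ` {..<l} = I" by (rule IF(5))
  have idxlt: "t < l \<Longrightarrow> idx k I t < idx k I (Suc t)" for t by (rule IF(6))
  define K where "K = real k"
  have Kp: "K > 0" using k unfolding K_def by simp
  define Gs where "Gs s = concat (map (Cblock k I s) [0..<l])" for s
  have fsG: "\<forall>q\<in>set (Gs s). fst q \<le> snd q" for s
  proof
    fix q assume "q \<in> set (Gs s)"
    then obtain t where t: "t < l" "q \<in> set (cb (idx k I t) (idx k I (Suc t)) (t \<noteq> s))"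
      unfolding Gs_def Cblock_cb by auto
    have "idx k I t \<le> idx k I (Suc t)" using idxlt[OF t(1)] by simp
    from set_cb[OF t(2) this] show "fst q \<le> snd q" by auto
  qed
  have memG: "x \<in> symclos (CIs k I s) \<longleftrightarrow> length x = length (Gs s) \<and> inT (real k) x \<and>
      Mt (real k) (\<lambda>p. x!p) {..<length x} (Gs s)" for x s
    unfolding CIs_def l_def[symmetric] Gs_def[symmetric] using symclos_tbox[OF _ fsG] k by simp
  have MtG: "Mt K val P (Gs s) \<longleftrightarrow> (\<exists>Pf. (\<forall>t<l. \<forall>r<l. t \<noteq> r \<longrightarrow> Pf t \<inter> Pf r = {}) \<and> (\<Union>t<l. Pf t) = P \<and>
      (\<forall>t<l. Mt K val (Pf t) (cb (idx k I t) (idx k I (Suc t)) (t \<noteq> s))))" for val P s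
    unfolding Gs_def Mt_concat Cblock_cb ..
  have blockiff: "Mt K val Q (cb (idx k I t) (idx k I (Suc t)) f) \<longleftrightarrow>
      int (card Q) = 2 * (Jc (Suc t) - Jc t) - (if f then 0 else 1) \<and>
      (\<forall>p\<in>Q. dd K (of_int (Jc t)) (val p) \<le> of_int (Jc (Suc t) - Jc t)) \<and>
      (\<forall>m::nat. int m < Jc (Suc t) - Jc t \<longrightarrow> 2 * m + (if f then 1 else 0) \<le> card {p\<in>Q. dd K (of_int (Jc t)) (val p) \<le> real m})"
    if t: "t < l" and Q: "finite Q" for t Q f val
  proof -
    define a where "a = idx k I t"
    define b where "b = idx k I (Suc t)"
    have ab: "a < b" unfolding a_def b_def using idxlt[OF t] .
    have Ja: "Jc t = int a" unfolding a_def using Jle t by simp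
    have Jb: "Jc (Suc t) = int b" unfolding b_def using Jle t by simp
    have e1: "(card Q = 2 * (b - a) - (if f then 0 else 1)) \<longleftrightarrow> (int (card Q) = 2 * (int b - int a) - (if f then 0 else 1))"
      using ab by (auto simp: of_nat_diff)
    have e2: "real (b - a) = of_int (int b - int a)" using ab by (simp add: of_nat_diff)
    have e3: "(m < b - a) \<longleftrightarrow> (int m < int b - int a)" for m using ab by auto
    show ?thesis unfolding a_def[symmetric] b_def[symmetric] cb_match[OF ab Q] Ja Jb e1 e2 e3 by simp
  qed
  show ?thesis
  proof
    show "(\<Inter>i\<in>I. Xi k i) \<subseteq> (\<Union>s<card I. symclos (CIs k I s))"
    proof
      fix x assume x: "x \<in> (\<Inter>i\<in>I. Xi k i)"
      obtain i0 where "i0 \<in> I" using I(2) by blast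
      hence "x \<in> Xi k i0" using x by blast
      hence h0: "length x = 2 * k - 1 \<and> inT (real k) x \<and>
        (\<forall>m<k. 2 * m \<le> card {p\<in>{..<length x}. dd (real k) (real i0) (x!p) \<le> real m})"
        by (rule Xi_mem[OF k, THEN iffD1])
      have lx: "length x = 2 * k - 1" using h0 by blast
      have ix: "inT (real k) x" using h0 by blast
      define P where "P = {..<length x}"
      have hyp: "\<forall>s<l. \<forall>m::nat. m < k \<longrightarrow> 2 * m \<le> card {p\<in>P. dd K (of_int (Jc s)) (x!p) \<le> real m}"
      proof (intro allI impI)
        fix s m assume s: "s < l" and m: "m < k"
        have "idx k I s \<in> I" using idxI s by blast
        hence "x \<in> Xi k (idx k I s)" using x by blast
        hence "length x = 2 * k - 1 \<and> inT (real k) x \<and>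
          (\<forall>m<k. 2 * m \<le> card {p\<in>{..<length x}. dd (real k) (real (idx k I s)) (x!p) \<le> real m})"
          by (rule Xi_mem[OF k, THEN iffD1])
        hence "2 * m \<le> card {p\<in>{..<length x}. dd (real k) (real (idx k I s)) (x!p) \<le> real m}"
          using m by blast
        thus "2 * m \<le> card {p\<in>P. dd K (of_int (Jc s)) (x!p) \<le> real m}"
          unfolding P_def K_def using Jle[of s] s by simp
      qed
      have Jl: "Jc l = Jc 0 + int k" using Jper[of 0 1] by simp
      obtain s Pf where s: "s < l" and Pf: "\<forall>t<l. \<forall>r<l. t \<noteq> r \<longrightarrow> Pf t \<inter> Pf r = {}" "(\<Union>t<l. Pf t) = P"
        "\<forall>t<l. int (card (Pf t)) = 2 * (Jc (Suc t) - Jc t) - (if t \<noteq> s then 0 else 1) \<and>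
      (\<forall>p\<in>Pf t. dd K (of_int (Jc t)) (x!p) \<le> of_int (Jc (Suc t) - Jc t)) \<and>
      (\<forall>m::nat. int m < Jc (Suc t) - Jc t \<longrightarrow>
         2 * m + (if t \<noteq> s then 1 else 0) \<le> card {p\<in>Pf t. dd K (of_int (Jc t)) (x!p) \<le> real m})"
      proof -
        have "finite P" "card P = 2 * k - 1" unfolding P_def using lx by auto
        from core_fwd[OF K_def k[unfolded One_nat_def Suc_le_eq] Jmono Jl lpos this hyp]
        show ?thesis by (elim exE conjE) (rule that; assumption)
      qed
      have finPf: "finite (Pf t)" if "t < l" for t
      proof -
        have "Pf t \<subseteq> (\<Union>t<l. Pf t)" using that by (intro UN_upper) simp
        hence "Pf t \<subseteq> P" using Pf(2) by simp
        thus ?thesis unfolding P_def using finite_subset by blast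
      qed
      have "\<forall>t<l. Mt K (\<lambda>p. x!p) (Pf t) (cb (idx k I t) (idx k I (Suc t)) (t \<noteq> s))"
      proof (intro allI impI)
        fix t assume t: "t < l"
        show "Mt K (\<lambda>p. x!p) (Pf t) (cb (idx k I t) (idx k I (Suc t)) (t \<noteq> s))"
          unfolding blockiff[OF t finPf[OF t]] using Pf(3) t by blast
      qed
      hence "Mt K (\<lambda>p. x!p) P (Gs s)" unfolding MtG using Pf(1,2) by blast
      moreover have "length x = length (Gs s)"
      proof -
        have "card P = length (Gs s)" by (rule Mt_card[OF \<open>Mt K (\<lambda>p. x!p) P (Gs s)\<close>])
        thus ?thesis unfolding P_def by simp
      qed
      ultimately have "x \<in> symclos (CIs k I s)" unfolding memG using ix P_def K_def by simp
      thus "x \<in> (\<Union>s<card I. symclos (CIs k I s))" using s l_def by blast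
    qed
  next
    show "(\<Union>s<card I. symclos (CIs k I s)) \<subseteq> (\<Inter>i\<in>I. Xi k i)"
    proof
      fix x assume "x \<in> (\<Union>s<card I. symclos (CIs k I s))"
      then obtain s where s: "s < l" and xs: "x \<in> symclos (CIs k I s)" unfolding l_def by blast
      define P where "P = {..<length x}"
      have xs': "length x = length (Gs s) \<and> inT (real k) x \<and> Mt (real k) (\<lambda>p. x!p) {..<length x} (Gs s)"
        by (rule memG[THEN iffD1, OF xs])
      have ix: "inT (real k) x" using xs' by blast
      have MG: "Mt K (\<lambda>p. x!p) P (Gs s)" using xs' unfolding P_def K_def by blast
      obtain Pf where Pf: "\<forall>t<l. \<forall>r<l. t \<noteq> r \<longrightarrow> Pf t \<inter> Pf r = {}" "(\<Union>t<l. Pf t) = P"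
        "\<forall>t<l. Mt K (\<lambda>p. x!p) (Pf t) (cb (idx k I t) (idx k I (Suc t)) (t \<noteq> s))"
        using MG unfolding MtG by blast
      have finPf: "finite (Pf t)" if "t < l" for t
      proof -
        have "Pf t \<subseteq> (\<Union>t<l. Pf t)" using that by (intro UN_upper) simp
        hence "Pf t \<subseteq> P" using Pf(2) by simp
        thus ?thesis unfolding P_def using finite_subset by blast
      qed
      have BC: "int (card (Pf t)) = 2 * (Jc (Suc t) - Jc t) - (if t \<noteq> s then 0 else 1) \<and>
      (\<forall>p\<in>Pf t. dd K (of_int (Jc t)) (x!p) \<le> of_int (Jc (Suc t) - Jc t)) \<and>
      (\<forall>m::nat. int m < Jc (Suc t) - Jc t \<longrightarrow>
         2 * m + (if t \<noteq> s then 1 else 0) \<le> card {p\<in>Pf t. dd K (of_int (Jc t)) (x!p) \<le> real m})"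
        if t: "t < l" for t
      proof -
        have "Mt K (\<lambda>p. x!p) (Pf t) (cb (idx k I t) (idx k I (Suc t)) (t \<noteq> s))" using Pf(3) t by blast
        thus ?thesis by (rule blockiff[OF t finPf[OF t], THEN iffD1])
      qed
      have Jl: "Jc l = Jc 0 + int k" using Jper[of 0 1] by simp
      have bcc: "\<forall>t<l. int (card (Pf t)) = 2 * (Jc (Suc t) - Jc t) - (if t \<noteq> s then 0 else 1)"
      proof (intro allI impI)
        fix t assume t: "t < l"
        show "int (card (Pf t)) = 2 * (Jc (Suc t) - Jc t) - (if t \<noteq> s then 0 else 1)" using BC[OF t] by blast
      qed
      have finP: "finite P" unfolding P_def by simp
      have "int (card P) = 2 * int k - 1"
        by (rule core_total[where fl = "\<lambda>t. t \<noteq> s", OF Jl s _ Pf(1) Pf(2) finP bcc]) simp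
      hence lx: "length x = 2 * k - 1" unfolding P_def by simp
      show "x \<in> (\<Inter>i\<in>I. Xi k i)"
      proof
        fix i assume "i \<in> I"
        then obtain u where u: "u < l" "i = idx k I u" using idxI by blast
        define J' where "J' t = Jc (t + u)" for t
        define Pf' where "Pf' t = Pf ((t + u) mod l)" for t
        define fl where "fl t = ((t + u) mod l \<noteq> s)" for t
        have rot: "J' t = Jc ((t + u) mod l) + int ((t + u) div l) * int k \<and>
                   J' (Suc t) = Jc (Suc ((t + u) mod l)) + int ((t + u) div l) * int k" for t
        proof -
          define r where "r = (t + u) mod l"
          define q where "q = (t + u) div l"
          have e: "t + u = r + q * l" unfolding r_def q_def by simp
          have "J' t = Jc (r + q * l)" unfolding J'_def e ..
          moreover have "J' (Suc t) = Jc (Suc r + q * l)" unfolding J'_def using e by simp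
          ultimately show ?thesis using Jper[of r q] Jper[of "Suc r" q] unfolding r_def[symmetric] q_def[symmetric] by simp
        qed
        have rdd: "dd K (of_int (J' t)) v = dd K (of_int (Jc ((t + u) mod l))) v" for t v
        proof -
          have "of_int (J' t) = of_int (Jc ((t + u) mod l)) + K * of_int (int ((t + u) div l))"
            using rot[of t] unfolding K_def by simp
          moreover have "dd K (of_int (Jc ((t + u) mod l)) + K * of_int (int ((t + u) div l))) v = dd K (of_int (Jc ((t + u) mod l))) v"
            by (rule dd_period[OF Kp])
          ultimately show ?thesis by simp
        qed
        have rml: "(t + u) mod l < l" for t using lpos by simp
        have "2 * m \<le> card {p\<in>P. dd K (of_int (J' 0)) (x!p) \<le> real m}" if m: "m < k" for m
        proof (rule core_back[OF K_def k[unfolded One_nat_def Suc_le_eq], where J = J' and l = l and fl = fl and Pf = Pf' and P = P and val = "\<lambda>p. x!p" and m = m])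
          show "m < k" by (rule m)
          show "\<forall>t. J' t < J' (Suc t)"
          proof
            fix t
            have "Jc (t + u) < Jc (Suc (t + u))" using Jmono by blast
            thus "J' t < J' (Suc t)" unfolding J'_def by simp
          qed
          show "J' l = J' 0 + int k" unfolding J'_def using Jper[of u 1] by (simp add: add.commute)
          show "\<forall>t<l. \<forall>r<l. \<not> fl t \<longrightarrow> \<not> fl r \<longrightarrow> t = r"
          proof (intro allI impI)
            fix t r assume a: "t < l" "r < l" "\<not> fl t" "\<not> fl r"
            hence "(t + u) mod l = (r + u) mod l" unfolding fl_def by simp
            thus "t = r" using modinj[OF a(1,2)] by blast
          qed
          show "\<forall>t<l. \<forall>r<l. t \<noteq> r \<longrightarrow> Pf' t \<inter> Pf' r = {}"
          proof (intro allI impI)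
            fix t r assume a: "t < l" "r < l" "t \<noteq> r"
            hence "(t + u) mod l \<noteq> (r + u) mod l" using modinj[OF a(1,2)] by blast
            thus "Pf' t \<inter> Pf' r = {}" unfolding Pf'_def using Pf(1) rml by blast
          qed
          show "\<forall>t<l. Pf' t \<subseteq> P"
          proof (intro allI impI)
            fix t assume "t < l"
            have "Pf ((t + u) mod l) \<subseteq> (\<Union>t<l. Pf t)" using rml by (intro UN_upper) simp
            thus "Pf' t \<subseteq> P" unfolding Pf'_def using Pf(2) by simp
          qed
          show "finite P" unfolding P_def by simp
          have dif: "J' (Suc t) - J' t = Jc (Suc ((t + u) mod l)) - Jc ((t + u) mod l)" for t
          proof -
            have "J' t = Jc ((t + u) mod l) + int ((t + u) div l) * int k" using rot[of t] by blast
            moreover have "J' (Suc t) = Jc (Suc ((t + u) mod l)) + int ((t + u) div l) * int k" using rot[of t] by blast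
            ultimately show ?thesis by simp
          qed
          show "\<forall>t<l. int (card (Pf' t)) = 2 * (J' (Suc t) - J' t) - (if fl t then 0 else 1)"
            unfolding Pf'_def fl_def dif using BC[OF rml] by blast
          show "\<forall>t<l. \<forall>p\<in>Pf' t. dd K (of_int (J' t)) (x!p) \<le> of_int (J' (Suc t) - J' t)"
            unfolding Pf'_def rdd dif using BC[OF rml] by blast
          show "\<forall>t<l. \<forall>m::nat. int m < J' (Suc t) - J' t \<longrightarrow>
            2 * m + (if fl t then 1 else 0) \<le> card {p\<in>Pf' t. dd K (of_int (J' t)) (x!p) \<le> real m}"
            unfolding Pf'_def fl_def rdd dif using BC[OF rml] by blast
        qed
        moreover have "J' 0 = int i" unfolding J'_def using Jle[of u] u by simp
        ultimately have "\<forall>m<k. 2 * m \<le> card {p\<in>{..<length x}. dd (real k) (real i) (x!p) \<le> real m}"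
          unfolding P_def K_def by simp
        hence "length x = 2 * k - 1 \<and> inT (real k) x \<and>
          (\<forall>m<k. 2 * m \<le> card {p\<in>{..<length x}. dd (real k) (real i) (x!p) \<le> real m})" using lx ix by blast
        thus "x \<in> Xi k i" by (rule Xi_mem[OF k, THEN iffD2])
      qed
    qed
  qed
qed



lemma mset_blocks:
  "mset (concat (map (\<lambda>t. (if t = s then [] else [(real t, real t)]) @ [(real t, real (Suc t))]) [0..<n])) =
   mset (map (\<lambda>i. (real i, real i)) (filter (\<lambda>i. i \<noteq> s) [0..<n]) @ map (\<lambda>i. (real i, real i + 1)) [0..<n])"
  by (induct n) (auto simp: add_ac)

lemma part2:
  assumes k: "k \<ge> 1" and s: "s < k"
  shows "symclos (CIs k {..<k} s) =
    symclos (tbox (real k) (map (\<lambda>i. (real i, real i)) (filter (\<lambda>i. i \<noteq> s) [0..<k])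
              @ map (\<lambda>i. (real i, real i + 1)) [0..<k]))"
proof -
  let ?T = "map (\<lambda>i. (real i, real i)) (filter (\<lambda>i. i \<noteq> s) [0..<k]) @ map (\<lambda>i. (real i, real i + 1)) [0..<k]"
  let ?G = "concat (map (Cblock k {..<k} s) [0..<k])"
  have sl: "sorted_list_of_set {..<k} = [0..<k]" by (simp add: lessThan_atLeast0)
  have idx1: "idx k {..<k} t = t" if "t \<le> k" for t
    unfolding idx_def Let_def sl using that k by (cases "t = k") auto
  have cb: "Cblock k {..<k} s t = (if t = s then [] else [(real t, real t)]) @ [(real t, real (Suc t))]" if "t < k" for t
    unfolding Cblock_def Let_def using idx1[of t] idx1[of "Suc t"] that by simp
  have "?G = concat (map (\<lambda>t. (if t = s then [] else [(real t, real t)]) @ [(real t, real (Suc t))]) [0..<k])"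
    using cb by (intro arg_cong[where f = concat] map_cong) auto
  hence ms: "mset ?G = mset ?T" using mset_blocks by simp
  have kp: "real k > 0" using k by simp
  have fsT: "\<forall>q\<in>set ?T. fst q \<le> snd q" by auto
  have fsG: "\<forall>q\<in>set ?G. fst q \<le> snd q"
  proof
    fix q assume "q \<in> set ?G"
    then obtain t where "t < k" "q \<in> set (Cblock k {..<k} s t)" by auto
    thus "fst q \<le> snd q" using cb by (auto split: if_splits)
  qed
  have len: "length ?G = length ?T" using mset_eq_length[OF ms] .
  have "CIs k {..<k} s = tbox (real k) ?G" unfolding CIs_def by simp
  moreover have "symclos (tbox (real k) ?G) = symclos (tbox (real k) ?T)"
  proof (rule set_eqI)
    fix x
    have "x \<in> symclos (tbox (real k) ?G) \<longleftrightarrow> length x = length ?G \<and> inT (real k) x \<and> Mt (real k) (\<lambda>p. x!p) {..<length x} ?G"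
      by (rule symclos_tbox[OF kp fsG])
    also have "\<dots> \<longleftrightarrow> length x = length ?T \<and> inT (real k) x \<and> Mt (real k) (\<lambda>p. x!p) {..<length x} ?T"
      unfolding len Mt_perm[OF ms] ..
    also have "\<dots> \<longleftrightarrow> x \<in> symclos (tbox (real k) ?T)"
      by (rule symclos_tbox[OF kp fsT, symmetric])
    finally show "x \<in> symclos (tbox (real k) ?G) \<longleftrightarrow> x \<in> symclos (tbox (real k) ?T)" .
  qed
  ultimately show ?thesis by simp
qed

theorem lemmaL:
  fixes k :: nat and I :: "nat set"
  assumes "k \<ge> 1" and "I \<subseteq> {..<k}" and "I \<noteq> {}"
  shows "(\<Inter>i\<in>I. Xi k i) = (\<Union>s<card I. symclos (CIs k I s))
    \<and> (\<Inter>i<k. Xi k i) =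
         (\<Union>istar<k. symclos (tbox (real k)
             (map (\<lambda>i. (real i, real i)) (filter (\<lambda>i. i \<noteq> istar) [0..<k])
              @ map (\<lambda>i. (real i, real i + 1)) [0..<k])))"
proof
  show "(\<Inter>i\<in>I. Xi k i) = (\<Union>s<card I. symclos (CIs k I s))" by (rule part1[OF assms])
  have "0 \<in> {..<k}" using assms(1) by simp
  hence ne: "{..<k} \<noteq> {}" by blast
  have "(\<Inter>i<k. Xi k i) = (\<Union>s<card {..<k}. symclos (CIs k {..<k} s))" by (rule part1[OF assms(1) subset_refl ne])
  also have "\<dots> = (\<Union>istar<k. symclos (CIs k {..<k} istar))" by simp
  also have "\<dots> = (\<Union>istar<k. symclos (tbox (real k)
             (map (\<lambda>i. (real i, real i)) (filter (\<lambda>i. i \<noteq> istar) [0..<k])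
              @ map (\<lambda>i. (real i, real i + 1)) [0..<k])))"
    using part2[OF assms(1)] by (intro SUP_cong) auto
  finally show "(\<Inter>i<k. Xi k i) =
         (\<Union>istar<k. symclos (tbox (real k)
             (map (\<lambda>i. (real i, real i)) (filter (\<lambda>i. i \<noteq> istar) [0..<k])
              @ map (\<lambda>i. (real i, real i + 1)) [0..<k])))" .
qed


end
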